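(* Let $\Omega,\Pi\subset\mathbb{C}$ be domains and let $f, u : \mathbb{C}\times\mathbb{C} \rightarrow \mathbb{C}$ be analytic in $\Omega \times \Pi$, such that for each $p\in\Pi$, $u(\cdot,p)$ is a polynomial of degree $m$. Suppose further that for each $\pi \in \Pi$ there exist points $z_1,\ldots,z_k \in \Omega$ (with $k$ possibly depending on $\pi$) and analytic functions $u_1,\ldots,u_k : \mathbb{C}\times\mathbb{C} \rightarrow \mathbb{C}$ such that $u_j$ is a Weierstrass polynomial at $(z_j,\pi)$ for each $j$, and $u(\cdot,p) = u_1(\cdot,p)\cdots u_k(\cdot,p)$ for all $p$ in some neighborhood of $\pi$. Then there exist unique analytic functions $g, r : \Omega \times \Pi \rightarrow \mathbb{C}$ such that for each $p \in \Pi$ the function $r(\cdot,p)$ is a polynomial of degree less than $m$, and $$f(z,p) = g(z,p)\,u(z,p) + r(z,p)\quad\text{for all }(z,p)\in\Omega\times\Pi.$$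
   Context: A Weierstrass polynomial of degree $k$ is a function $u(z,p) = z^k + \alpha_{k-1}(p) z^{k-1} + \cdots + \alpha_1(p) z + \alpha_0(p)$, where each $\alpha_j:\mathbb{C}\to\mathbb{C}$ is analytic near $0$ and $\alpha_j(0)=0$. A function $v:\mathbb{C}\times\mathbb{C}\to\mathbb{C}$ is a Weierstrass polynomial at $(z_0,p_0)$ if $(z,p)\mapsto v(z+z_0,p+p_0)$ is a Weierstrass polynomial. *)

theory Defs
  imports "HOL-Complex_Analysis.Complex_Analysis" "HOL-Computational_Algebra.Polynomial"
begin

definition analytic2_on :: "(complex \<times> complex \<Rightarrow> complex) \<Rightarrow> (complex \<times> complex) set \<Rightarrow> bool" where
  "analytic2_on f S \<longleftrightarrow>
     (\<forall>w\<in>S. \<exists>e>0. \<exists>a :: nat \<Rightarrow> nat \<Rightarrow> complex.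
        \<forall>x. dist x w < e \<longrightarrow>
          ((\<lambda>(i,j). a i j * (fst x - fst w) ^ i * (snd x - snd w) ^ j) has_sum f x) UNIV)"

definition weierstrass_poly :: "(complex \<times> complex \<Rightarrow> complex) \<Rightarrow> bool" where
  "weierstrass_poly u \<longleftrightarrow>
     (\<exists>k::nat. \<exists>\<alpha> :: nat \<Rightarrow> complex \<Rightarrow> complex.
        (\<forall>j<k. \<alpha> j analytic_on {0} \<and> \<alpha> j 0 = 0) \<and>
        (\<forall>z p. u (z, p) = z ^ k + (\<Sum>j<k. \<alpha> j p * z ^ j)))"

definition weierstrass_poly_at :: "(complex \<times> complex \<Rightarrow> complex) \<Rightarrow> complex \<Rightarrow> complex \<Rightarrow> bool" where
  "weierstrass_poly_at v z0 p0 \<longleftrightarrow> weierstrass_poly (\<lambda>(z, p). v (z + z0, p + p0))"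

end

theory Submission
  imports Defs
begin

lemma cint_param_cont:
  fixes H :: "complex \<Rightarrow> 'a::heine_borel \<Rightarrow> complex"
  assumes W: "open W" and s: "0 < s"
    and cont: "continuous_on (sphere c s \<times> W) (\<lambda>(\<zeta>,w). H \<zeta> w)"
  shows "continuous_on W (\<lambda>w. contour_integral (circlepath c s) (\<lambda>\<zeta>. H \<zeta> w))"
  unfolding continuous_on_iff
proof (intro ballI allI impI)
  fix w e assume w: "w \<in> W" and e: "(0::real) < e"
  have pim: "path_image (circlepath c s) = sphere c s"
    using s by (simp add: path_image_circlepath_nonneg)
  have contw: "continuous_on (sphere c s) (\<lambda>\<zeta>. H \<zeta> v)" if "v \<in> W" for v
  proof -
    have "continuous_on (sphere c s) ((\<lambda>(\<zeta>,w). H \<zeta> w) \<circ> (\<lambda>\<zeta>. (\<zeta>, v)))"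
      by (rule continuous_on_compose) (auto intro!: continuous_intros continuous_on_subset[OF cont] simp: that)
    then show ?thesis by (simp add: o_def)
  qed
  have intw: "(\<lambda>\<zeta>. H \<zeta> v) contour_integrable_on (circlepath c s)" if "v \<in> W" for v
    using contw[OF that] pim by (intro contour_integrable_continuous_circlepath) simp
  obtain dd where dd: "dd > 0" "cball w dd \<subseteq> W"
    using W w open_contains_cball by blast
  define K where "K = sphere c s \<times> cball w dd"
  have "compact K" unfolding K_def by (intro compact_Times compact_sphere compact_cball)
  moreover have "continuous_on K (\<lambda>(\<zeta>,w). H \<zeta> w)"
    using dd unfolding K_def by (auto intro: continuous_on_subset[OF cont])
  ultimately have uc: "uniformly_continuous_on K (\<lambda>(\<zeta>,w). H \<zeta> w)"
    by (metis compact_uniformly_continuous)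
  define et where "et = e / (4 * pi * s)"
  have et: "et > 0" using e s by (simp add: et_def)
  obtain kk where kk: "kk > 0"
    and kkD: "\<And>x x'. x \<in> K \<Longrightarrow> x' \<in> K \<Longrightarrow> dist x' x < kk \<Longrightarrow>
        dist ((\<lambda>(\<zeta>,w). H \<zeta> w) x') ((\<lambda>(\<zeta>,w). H \<zeta> w) x) < et"
    using uc et unfolding uniformly_continuous_on_def by metis
  show "\<exists>d>0. \<forall>w'\<in>W. dist w' w < d \<longrightarrow>
      dist (contour_integral (circlepath c s) (\<lambda>\<zeta>. H \<zeta> w')) (contour_integral (circlepath c s) (\<lambda>\<zeta>. H \<zeta> w)) < e"
  proof (intro exI[of _ "min dd kk"] conjI ballI impI)
    show "0 < min dd kk" using dd kk by simp
    fix w' assume w': "w' \<in> W" and dw: "dist w' w < min dd kk"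
    have bnd: "norm (H \<zeta> w' - H \<zeta> w) \<le> et" if "norm (\<zeta> - c) = s" for \<zeta>
    proof -
      have z: "\<zeta> \<in> sphere c s" using that by (simp add: dist_norm norm_minus_commute)
      have "(\<zeta>, w) \<in> K" "(\<zeta>, w') \<in> K" using z dd dw by (auto simp: K_def dist_commute)
      moreover have "dist (\<zeta>, w') (\<zeta>, w) < kk" using dw by (simp add: dist_Pair_Pair)
      ultimately have "dist (H \<zeta> w') (H \<zeta> w) < et" using kkD by fastforce
      then show ?thesis by (simp add: dist_norm)
    qed
    have hi: "((\<lambda>\<zeta>. H \<zeta> w' - H \<zeta> w) has_contour_integral
        (contour_integral (circlepath c s) (\<lambda>\<zeta>. H \<zeta> w') - contour_integral (circlepath c s) (\<lambda>\<zeta>. H \<zeta> w))) (circlepath c s)"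
      by (intro has_contour_integral_diff has_contour_integral_integral intw w w')
    have "norm (contour_integral (circlepath c s) (\<lambda>\<zeta>. H \<zeta> w') - contour_integral (circlepath c s) (\<lambda>\<zeta>. H \<zeta> w)) \<le> et * (2 * pi * s)"
      by (rule has_contour_integral_bound_circlepath[OF hi]) (use et s bnd in auto)
    also have "\<dots> = e/2" using s by (simp add: et_def field_simps)
    also have "\<dots> < e" using e by simp
    finally show "dist (contour_integral (circlepath c s) (\<lambda>\<zeta>. H \<zeta> w')) (contour_integral (circlepath c s) (\<lambda>\<zeta>. H \<zeta> w)) < e"
      by (simp add: dist_norm)
  qed
qed

lemma circlepath_vd_cont: "continuous_on {0..1} (\<lambda>t. vector_derivative (circlepath z r) (at t))"
  by (simp add: vector_derivative_circlepath) (intro continuous_intros)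

lemma cint_param_holo:
  assumes W: "open W" and s: "0 < s"
    and cont: "continuous_on (sphere c s \<times> W) (\<lambda>(\<zeta>,w). H \<zeta> w)"
    and hol: "\<And>\<zeta>. \<zeta> \<in> sphere c s \<Longrightarrow> H \<zeta> holomorphic_on W"
  shows "(\<lambda>w. contour_integral (circlepath c s) (\<lambda>\<zeta>. H \<zeta> w)) holomorphic_on W"
proof -
  define \<Phi> where "\<Phi> w = contour_integral (circlepath c s) (\<lambda>\<zeta>. H \<zeta> w)" for w
  have pim: "path_image (circlepath c s) = sphere c s"
    using s by (simp add: path_image_circlepath_nonneg)
  have Phic: "continuous_on W \<Phi>"
    unfolding \<Phi>_def by (rule cint_param_cont[OF W s cont])
  have "\<exists>f'. (\<Phi> has_field_derivative f') (at w0)" if w0: "w0 \<in> W" for w0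
  proof -
    obtain t where t: "t > 0" "cball w0 t \<subseteq> W"
      using W w0 open_contains_cball by blast
    have pimt: "path_image (circlepath w0 t) = sphere w0 t"
      using t by (simp add: path_image_circlepath_nonneg)
    have int: "((\<lambda>\<eta>. \<Phi> \<eta> / (\<eta> - v)^1) has_contour_integral (2 * of_real pi * \<i> * \<Phi> v)) (circlepath w0 t)"
      if v: "v \<in> ball w0 t" for v
    proof -
      have vW: "v \<in> W" using v t by auto
      have C: "contour_integral (circlepath w0 t) (\<lambda>\<eta>. H \<zeta> \<eta> / (\<eta> - v)) = 2 * of_real pi * \<i> * H \<zeta> v"
        if z: "\<zeta> \<in> sphere c s" for \<zeta>
      proof (rule contour_integral_unique, rule Cauchy_integral_circlepath)
        show "continuous_on (cball w0 t) (H \<zeta>)"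
          using hol[OF z] t holomorphic_on_imp_continuous_on holomorphic_on_subset by blast
        show "H \<zeta> holomorphic_on ball w0 t"
          using hol[OF z] t holomorphic_on_subset by (meson ball_subset_cball order_trans)
        show "cmod (v - w0) < t" using v by (simp add: dist_norm norm_minus_commute)
      qed
      have contH: "continuous_on (sphere c s) (\<lambda>\<zeta>. H \<zeta> v)"
      proof -
        have "continuous_on (sphere c s) ((\<lambda>(\<zeta>,w). H \<zeta> w) \<circ> (\<lambda>\<zeta>. (\<zeta>, v)))"
          by (rule continuous_on_compose) (auto intro!: continuous_intros continuous_on_subset[OF cont] simp: vW)
        then show ?thesis by (simp add: o_def)
      qed
      have "2 * of_real pi * \<i> * \<Phi> v = contour_integral (circlepath c s) (\<lambda>\<zeta>. 2 * of_real pi * \<i> * H \<zeta> v)"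
        unfolding \<Phi>_def
        by (rule contour_integral_lmul[symmetric], rule contour_integrable_continuous_circlepath) (use s contH in simp)
      also have "\<dots> = contour_integral (circlepath c s) (\<lambda>\<zeta>. contour_integral (circlepath w0 t) (\<lambda>\<eta>. H \<zeta> \<eta> / (\<eta> - v)))"
        by (rule contour_integral_eq) (use s C in simp)
      also have "\<dots> = contour_integral (circlepath w0 t) (\<lambda>\<eta>. contour_integral (circlepath c s) (\<lambda>\<zeta>. H \<zeta> \<eta> / (\<eta> - v)))"
      proof (rule contour_integral_swap)
        have "continuous_on (sphere c s \<times> sphere w0 t) (\<lambda>(\<zeta>,\<eta>). H \<zeta> \<eta> / (\<eta> - v))"
        proof -
          have c1: "continuous_on (sphere c s \<times> sphere w0 t) (\<lambda>(\<zeta>,\<eta>). H \<zeta> \<eta>)"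
            by (rule continuous_on_subset[OF cont]) (use t in auto)
          have c2: "continuous_on (sphere c s \<times> sphere w0 t) (\<lambda>(\<zeta>,\<eta>::complex). \<eta> - v)"
            by (auto intro!: continuous_intros simp: case_prod_unfold)
          have "\<forall>x\<in>sphere c s \<times> sphere w0 t. (\<lambda>(\<zeta>,\<eta>::complex). \<eta> - v) x \<noteq> 0"
            using v by (auto simp: dist_commute)
          from continuous_on_divide[OF c1 c2 this] show ?thesis
            by (simp add: case_prod_unfold)
        qed
        then show "continuous_on (path_image (circlepath c s) \<times> path_image (circlepath w0 t)) (\<lambda>(y1, y2). H y1 y2 / (y2 - v))"
          using s t by simp
      qed (auto simp: circlepath_vd_cont)
      also have "\<dots> = contour_integral (circlepath w0 t) (\<lambda>\<eta>. \<Phi> \<eta> / (\<eta> - v))"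
      proof (rule contour_integral_eq)
        fix \<eta> assume "\<eta> \<in> path_image (circlepath w0 t)"
        then have e: "\<eta> \<in> W" using pimt t by auto
        have contH': "continuous_on (sphere c s) (\<lambda>\<zeta>. H \<zeta> \<eta>)"
        proof -
          have "continuous_on (sphere c s) ((\<lambda>(\<zeta>,w). H \<zeta> w) \<circ> (\<lambda>\<zeta>. (\<zeta>, \<eta>)))"
            by (rule continuous_on_compose) (auto intro!: continuous_intros continuous_on_subset[OF cont] simp: e)
          then show ?thesis by (simp add: o_def)
        qed
        show "contour_integral (circlepath c s) (\<lambda>\<zeta>. H \<zeta> \<eta> / (\<eta> - v)) = \<Phi> \<eta> / (\<eta> - v)"
          unfolding \<Phi>_def
          by (rule contour_integral_div, rule contour_integrable_continuous_circlepath) (use s contH' in simp)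
      qed
      finally have eq: "contour_integral (circlepath w0 t) (\<lambda>\<eta>. \<Phi> \<eta> / (\<eta> - v)) = 2 * of_real pi * \<i> * \<Phi> v" by simp
      have "continuous_on (sphere w0 t) (\<lambda>\<eta>. \<Phi> \<eta> / (\<eta> - v))"
        using v t by (intro continuous_intros continuous_on_subset[OF Phic]) (auto simp: dist_commute)
      then have "(\<lambda>\<eta>. \<Phi> \<eta> / (\<eta> - v)) contour_integrable_on (circlepath w0 t)"
        by (intro contour_integrable_continuous_circlepath) (use t in simp)
      from has_contour_integral_integral[OF this] show ?thesis by (simp add: eq)
    qed
    have "continuous_on (path_image (circlepath w0 t)) \<Phi>"
      using t pimt by (metis continuous_on_subset[OF Phic] sphere_cball order_trans)
    from Cauchy_next_derivative_circlepath(2)[OF this int, of w0] t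
    obtain D where D: "((\<lambda>v. 2 * of_real pi * \<i> * \<Phi> v) has_field_derivative D) (at w0)" by auto
    have "((\<lambda>v. inverse (2 * of_real pi * \<i>) * (2 * of_real pi * \<i> * \<Phi> v)) has_field_derivative inverse (2 * of_real pi * \<i>) * D) (at w0)"
      by (rule DERIV_cmult[OF D])
    then show ?thesis by (auto simp: field_simps)
  qed
  then show ?thesis unfolding \<Phi>_def[symmetric] using W by (simp add: holomorphic_on_open)
qed

lemma has_sum_diag:
  fixes T :: "nat \<times> nat \<Rightarrow> 'a::{topological_comm_monoid_add,t3_space}"
  assumes "(T has_sum S) UNIV"
  shows "((\<lambda>n. \<Sum>i\<le>n. T (i, n - i)) has_sum S) UNIV"
proof -
  have bij: "bij_betw (\<lambda>(n::nat,i::nat). (i, n-i)) (SIGMA n:UNIV. {..n}) UNIV"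
    unfolding bij_betw_def
  proof (intro conjI)
    show "inj_on (\<lambda>(n::nat,i::nat). (i, n-i)) (SIGMA n:UNIV. {..n})"
    proof (rule inj_onI)
      fix x y :: "nat \<times> nat" assume "x \<in> (SIGMA n:UNIV. {..n})" "y \<in> (SIGMA n:UNIV. {..n})"
        "(\<lambda>(n::nat,i::nat). (i, n-i)) x = (\<lambda>(n::nat,i::nat). (i, n-i)) y"
      then show "x = y" by (cases x; cases y) auto
    qed
    have "(i, j) \<in> (\<lambda>(n::nat,i::nat). (i, n-i)) ` (SIGMA n:UNIV. {..n})" for i j :: nat
      by (rule image_eqI[where x="(i+j, i)"]) auto
    then show "(\<lambda>(n::nat,i::nat). (i, n-i)) ` (SIGMA n:UNIV. {..n}) = UNIV" by (metis UNIV_eq_I surj_pair)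
  qed
  have "((\<lambda>x. T ((\<lambda>(n::nat,i::nat). (i, n-i)) x)) has_sum S) (SIGMA n:UNIV. {..n})"
    using has_sum_reindex_bij_betw[OF bij, of T] assms by simp
  then have "((\<lambda>(n,i). T (i, n-i)) has_sum S) (SIGMA n:UNIV. {..n})"
    by (simp add: case_prod_unfold)
  then show ?thesis
    by (rule has_sum_SigmaD) auto
qed

lemma uniform_limit_compose_pt:
  assumes "uniform_limit A f g F" "\<And>z. z \<in> B \<Longrightarrow> k z \<in> A"
  shows "uniform_limit B (\<lambda>n z. f n (k z)) (\<lambda>z. g (k z)) F"
  using assms unfolding uniform_limit_iff by (fastforce elim!: eventually_mono)

lemma analytic2_local:
  fixes a :: "nat \<Rightarrow> nat \<Rightarrow> complex" and F :: "complex \<times> complex \<Rightarrow> complex"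
  assumes e: "e > 0"
    and hs: "\<And>x. dist x (z0,p0) < e \<Longrightarrow>
      ((\<lambda>(i,j). a i j * (fst x - z0) ^ i * (snd x - p0) ^ j) has_sum F x) UNIV"
  shows "continuous_on (ball z0 (e/2) \<times> ball p0 (e/2)) F"
    and "\<And>z p. z \<in> ball z0 (e/2) \<Longrightarrow> p \<in> ball p0 (e/2) \<Longrightarrow> (\<lambda>z. F (z,p)) field_differentiable at z"
    and "\<And>z p. z \<in> ball z0 (e/2) \<Longrightarrow> p \<in> ball p0 (e/2) \<Longrightarrow> (\<lambda>p. F (z,p)) field_differentiable at p"
proof -
  define \<rho> where "\<rho> = e/2"
  have \<rho>: "\<rho> > 0" using e by (simp add: \<rho>_def)
  define D where "D = ball z0 \<rho> \<times> ball p0 \<rho>"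
  define P where "P n x = (\<Sum>i\<le>n. a i (n-i) * (fst x - z0)^i * (snd x - p0)^(n-i))" for n x
  have distD: "dist x (z0,p0) < e" if "dist (fst x) z0 \<le> \<rho>" "dist (snd x) p0 \<le> \<rho>" "\<not> (dist (fst x) z0 = \<rho> \<and> dist (snd x) p0 = \<rho> \<and> False)" for x
  proof -
    have "dist x (z0,p0) \<le> sqrt ((dist (fst x) z0)\<^sup>2 + (dist (snd x) p0)\<^sup>2)"
      by (metis dist_Pair_Pair prod.collapse order_refl)
    also have "\<dots> \<le> sqrt (\<rho>\<^sup>2 + \<rho>\<^sup>2)"
      using that by (intro real_sqrt_le_mono add_mono power_mono) auto
    also have "\<dots> = sqrt 2 * \<rho>" using \<rho> by (simp add: real_sqrt_mult)
    also have "\<dots> < 2 * \<rho>" using \<rho> by (intro mult_strict_right_mono) (auto simp: real_less_lsqrt)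
    finally show ?thesis by (simp add: \<rho>_def)
  qed
  have sums: "(\<lambda>n. P n x) sums F x" if "dist x (z0,p0) < e" for x
  proof -
    have "((\<lambda>n. \<Sum>i\<le>n. (\<lambda>(i,j). a i j * (fst x - z0) ^ i * (snd x - p0) ^ j) (i, n-i)) has_sum F x) UNIV"
      by (rule has_sum_diag[OF hs[OF that]])
    then show ?thesis by (intro has_sum_imp_sums) (simp add: P_def)
  qed
  define xs where "xs = (z0 + of_real \<rho>, p0 + of_real \<rho>)"
  have "dist xs (z0,p0) < e" by (rule distD) (use \<rho> in \<open>auto simp: xs_def dist_norm\<close>)
  from hs[OF this] have "(\<lambda>(i,j). a i j * (of_real \<rho>) ^ i * (of_real \<rho>) ^ j) summable_on UNIV"
    by (auto simp: xs_def summable_on_def)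
  then have "(\<lambda>(i,j). norm (a i j * (of_real \<rho>) ^ i * (of_real \<rho>) ^ j)) summable_on UNIV"
    by (simp add: summable_on_iff_abs_summable_on_complex case_prod_unfold)
  then obtain A where "((\<lambda>(i,j). norm (a i j * (of_real \<rho>) ^ i * (of_real \<rho>) ^ j)) has_sum A) UNIV"
    by (auto simp: summable_on_def)
  from has_sum_imp_sums[OF has_sum_diag[OF this]]
  have Msum: "summable (\<lambda>n. \<Sum>i\<le>n. norm (a i (n-i)) * \<rho> ^ i * \<rho> ^ (n-i))"
    using \<rho> by (auto simp: sums_iff norm_mult norm_power)
  have Pbound: "norm (P n x) \<le> (\<Sum>i\<le>n. norm (a i (n-i)) * \<rho> ^ i * \<rho> ^ (n-i))" if "x \<in> D" for n x
  proof -
    have "norm (P n x) \<le> (\<Sum>i\<le>n. norm (a i (n-i) * (fst x - z0)^i * (snd x - p0)^(n-i)))"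
      unfolding P_def by (rule norm_sum)
    also have "\<dots> \<le> (\<Sum>i\<le>n. norm (a i (n-i)) * \<rho> ^ i * \<rho> ^ (n-i))"
    proof (rule sum_mono)
      fix i
      have "norm (fst x - z0) \<le> \<rho>" "norm (snd x - p0) \<le> \<rho>"
        using that by (auto simp: D_def dist_norm norm_minus_commute mem_Times_iff)
      then have h1: "norm (fst x - z0)^i \<le> \<rho>^i" and h2: "norm (snd x - p0)^(n-i) \<le> \<rho>^(n-i)"
        by (auto intro!: power_mono)
      have "norm (a i (n-i)) * norm (fst x - z0)^i * norm (snd x - p0)^(n-i) \<le> norm (a i (n-i)) * \<rho> ^ i * \<rho> ^ (n-i)"
        by (rule mult_mono[OF mult_left_mono[OF h1] h2]) (use \<rho> in auto)
      then show "norm (a i (n-i) * (fst x - z0)^i * (snd x - p0)^(n-i)) \<le> norm (a i (n-i)) * \<rho> ^ i * \<rho> ^ (n-i)"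
        by (simp add: norm_mult norm_power)
    qed
    finally show ?thesis .
  qed
  have ul0: "uniform_limit D (\<lambda>N x. \<Sum>n<N. P n x) (\<lambda>x. suminf (\<lambda>n. P n x)) sequentially"
    by (rule Weierstrass_m_test[OF Pbound Msum])
  have FD: "suminf (\<lambda>n. P n x) = F x" if "x \<in> D" for x
  proof -
    have "dist x (z0,p0) < e"
      using that by (intro distD) (auto simp: D_def dist_commute mem_Times_iff)
    then show ?thesis using sums sums_unique by metis
  qed
  have ul: "uniform_limit D (\<lambda>N x. \<Sum>n<N. P n x) F sequentially"
    using ul0 by (rule uniform_limit_cong'[THEN iffD1, rotated -1]) (auto simp: FD)
  have contP: "continuous_on S (\<lambda>x. \<Sum>n<N. P n x)" for S N
    unfolding P_def by (intro continuous_intros)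
  show "continuous_on (ball z0 (e/2) \<times> ball p0 (e/2)) F"
    unfolding \<rho>_def[symmetric] D_def[symmetric]
    by (rule uniform_limit_theorem[OF _ ul]) (auto simp: contP)
  show "(\<lambda>z. F (z,p)) field_differentiable at z" if zp: "z \<in> ball z0 (e/2)" "p \<in> ball p0 (e/2)" for z p
  proof -
    define r where "r = (\<rho> - dist z0 z)/2"
    have r: "r > 0" using zp by (simp add: r_def \<rho>_def)
    have sub: "cball z r \<subseteq> ball z0 \<rho>"
    proof
      fix y assume "y \<in> cball z r"
      then have "dist z y \<le> r" by simp
      moreover have "dist z0 y \<le> dist z0 z + dist z y" by (rule dist_triangle)
      ultimately show "y \<in> ball z0 \<rho>" using zp by (simp add: r_def \<rho>_def)
    qed
    have UL: "uniform_limit (cball z r) (\<lambda>N y. \<Sum>n<N. P n (y,p)) (\<lambda>y. F (y,p)) sequentially"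
      by (rule uniform_limit_compose_pt[OF ul]) (use sub zp in \<open>auto simp: D_def \<rho>_def\<close>)
    have c1: "continuous_on S (\<lambda>y. \<Sum>n<N. P n (y,p))" for S N
      by (simp add: P_def) (intro continuous_intros)
    have h1: "(\<lambda>y. \<Sum>n<N. P n (y,p)) holomorphic_on S" for S N
      by (simp add: P_def) (intro holomorphic_intros)
    have "(\<lambda>y. F (y,p)) holomorphic_on ball z r"
      by (rule holomorphic_uniform_limit[OF _ UL]) (auto intro!: always_eventually c1 h1)
    then show ?thesis using r by (auto intro!: holomorphic_on_imp_differentiable_at)
  qed
  show "(\<lambda>p. F (z,p)) field_differentiable at p" if zp: "z \<in> ball z0 (e/2)" "p \<in> ball p0 (e/2)" for z p
  proof -
    define r where "r = (\<rho> - dist p0 p)/2"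
    have r: "r > 0" using zp by (simp add: r_def \<rho>_def)
    have sub: "cball p r \<subseteq> ball p0 \<rho>"
    proof
      fix y assume "y \<in> cball p r"
      then have "dist p y \<le> r" by simp
      moreover have "dist p0 y \<le> dist p0 p + dist p y" by (rule dist_triangle)
      ultimately show "y \<in> ball p0 \<rho>" using zp by (simp add: r_def \<rho>_def)
    qed
    have UL: "uniform_limit (cball p r) (\<lambda>N y. \<Sum>n<N. P n (z,y)) (\<lambda>y. F (z,y)) sequentially"
      by (rule uniform_limit_compose_pt[OF ul]) (use sub zp in \<open>auto simp: D_def \<rho>_def\<close>)
    have c1: "continuous_on S (\<lambda>y. \<Sum>n<N. P n (z,y))" for S N
      by (simp add: P_def) (intro continuous_intros)
    have h1: "(\<lambda>y. \<Sum>n<N. P n (z,y)) holomorphic_on S" for S N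
      by (simp add: P_def) (intro holomorphic_intros)
    have "(\<lambda>y. F (z,y)) holomorphic_on ball p r"
      by (rule holomorphic_uniform_limit[OF _ UL]) (auto intro!: always_eventually c1 h1)
    then show ?thesis using r by (auto intro!: holomorphic_on_imp_differentiable_at)
  qed
qed

definition sephol :: "(complex \<times> complex) set \<Rightarrow> (complex \<times> complex \<Rightarrow> complex) \<Rightarrow> bool" where
  "sephol S F \<longleftrightarrow> continuous_on S F \<and>
     (\<forall>z p. (z,p) \<in> S \<longrightarrow> (\<lambda>z. F (z,p)) field_differentiable at z) \<and>
     (\<forall>z p. (z,p) \<in> S \<longrightarrow> (\<lambda>p. F (z,p)) field_differentiable at p)"

lemma analytic2_sephol:
  assumes S: "open S" and an: "analytic2_on F S"
  shows "sephol S F"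
proof -
  have loc: "\<exists>e>0. continuous_on (ball z0 (e/2) \<times> ball p0 (e/2)) F \<and>
      (\<lambda>z. F (z,p0)) field_differentiable at z0 \<and> (\<lambda>p. F (z0,p)) field_differentiable at p0"
    if w: "(z0,p0) \<in> S" for z0 p0
  proof -
    from an w have "\<exists>e>0. \<exists>a :: nat \<Rightarrow> nat \<Rightarrow> complex. \<forall>x. dist x (z0,p0) < e \<longrightarrow>
          ((\<lambda>(i,j). a i j * (fst x - fst (z0,p0)) ^ i * (snd x - snd (z0,p0)) ^ j) has_sum F x) UNIV"
      unfolding analytic2_on_def by blast
    then obtain e and a :: "nat \<Rightarrow> nat \<Rightarrow> complex" where e: "e > 0" and
      hs0: "\<forall>x. dist x (z0,p0) < e \<longrightarrow>
          ((\<lambda>(i,j). a i j * (fst x - fst (z0,p0)) ^ i * (snd x - snd (z0,p0)) ^ j) has_sum F x) UNIV"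
      by blast
    have hs: "((\<lambda>(i,j). a i j * (fst x - z0) ^ i * (snd x - p0) ^ j) has_sum F x) UNIV"
      if "dist x (z0,p0) < e" for x
    proof -
      have "((\<lambda>(i,j). a i j * (fst x - fst (z0,p0)) ^ i * (snd x - snd (z0,p0)) ^ j) has_sum F x) UNIV"
        using hs0 that by blast
      then show ?thesis by (simp only: fst_conv snd_conv)
    qed
    note L = analytic2_local[OF e hs]
    show ?thesis using e L(1) L(2)[of z0 p0] L(3)[of z0 p0] by auto
  qed
  have "continuous (at w) F" if "w \<in> S" for w
  proof -
    obtain z0 p0 where w: "w = (z0,p0)" by fastforce
    from loc[of z0 p0] that w obtain e where e: "e > 0" and c: "continuous_on (ball z0 (e/2) \<times> ball p0 (e/2)) F"
      by auto
    have "open (ball z0 (e/2) \<times> ball p0 (e/2))" by (intro open_Times open_ball)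
    moreover have "w \<in> ball z0 (e/2) \<times> ball p0 (e/2)" using e w by auto
    ultimately show ?thesis using c continuous_on_eq_continuous_at by blast
  qed
  then have "continuous_on S F" using S continuous_on_eq_continuous_at by blast
  then show ?thesis unfolding sephol_def using loc by blast
qed

lemma geom2_summable:
  fixes q1 q2 :: real
  assumes "0 \<le> q1" "q1 < 1" "0 \<le> q2" "q2 < 1"
  shows "(\<lambda>(i,j). q1 ^ i * q2 ^ j) summable_on UNIV"
proof -
  have g2: "((\<lambda>j. q2 ^ j) has_sum (1 / (1 - q2))) UNIV"
    using assms by (intro sums_nonneg_imp_has_sum_strong geometric_sums) auto
  have "((\<lambda>j. q1 ^ i * q2 ^ j) has_sum (q1 ^ i * (1 / (1 - q2)))) UNIV" for i
    by (rule has_sum_cmult_right[OF g2])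
  moreover have "(\<lambda>i. q1 ^ i * (1 / (1 - q2))) summable_on UNIV"
  proof -
    have "((\<lambda>i. q1 ^ i) has_sum (1 / (1 - q1))) UNIV"
      using assms by (intro sums_nonneg_imp_has_sum_strong geometric_sums) auto
    from has_sum_cmult_left[OF this, of "1 / (1 - q2)"] show ?thesis unfolding summable_on_def by blast
  qed
  ultimately have "(\<lambda>x. q1 ^ fst x * q2 ^ snd x) summable_on Sigma UNIV (\<lambda>_. UNIV)"
    by (intro summable_on_SigmaI[where g="\<lambda>i. q1 ^ i * (1 / (1 - q2))"]) (use assms in auto)
  then show ?thesis by (simp add: case_prod_unfold)
qed

lemma holo_of_fd: "(\<And>x. x \<in> A \<Longrightarrow> f field_differentiable at x) \<Longrightarrow> f holomorphic_on A"
  by (simp add: holomorphic_on_def field_differentiable_at_within)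

lemma sephol_analytic2:
  assumes S: "open S" and sh: "sephol S F"
  shows "analytic2_on F S"
  unfolding analytic2_on_def
proof
  fix w assume wS: "w \<in> S"
  obtain z0 p0 where w: "w = (z0,p0)" by fastforce
  obtain \<epsilon> where \<epsilon>: "\<epsilon> > 0" "ball w \<epsilon> \<subseteq> S" using S wS open_contains_ball by blast
  define r where "r = \<epsilon>/2"
  have r: "r > 0" using \<epsilon> by (simp add: r_def)
  have KS: "cball z0 r \<times> cball p0 r \<subseteq> S"
  proof (clarify)
    fix z p assume zp: "z \<in> cball z0 r" "p \<in> cball p0 r"
    have "dist (z,p) w = sqrt ((dist z z0)\<^sup>2 + (dist p p0)\<^sup>2)" by (simp add: w dist_Pair_Pair)
    also have "\<dots> \<le> sqrt (r\<^sup>2 + r\<^sup>2)"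
      using zp by (intro real_sqrt_le_mono add_mono power_mono) (auto simp: dist_commute)
    also have "\<dots> = sqrt 2 * r" using r by (simp add: real_sqrt_mult)
    also have "\<dots> < 2 * r" using r by (intro mult_strict_right_mono) (auto simp: real_less_lsqrt)
    finally have "(z,p) \<in> ball w \<epsilon>" by (simp add: r_def dist_commute)
    then show "(z,p) \<in> S" using \<epsilon> by blast
  qed
  have contF: "continuous_on S F" and dz: "\<And>z p. (z,p) \<in> S \<Longrightarrow> (\<lambda>z. F (z,p)) field_differentiable at z"
    and dp: "\<And>z p. (z,p) \<in> S \<Longrightarrow> (\<lambda>p. F (z,p)) field_differentiable at p"
    using sh by (auto simp: sephol_def)
  define K where "K = cball z0 r \<times> cball p0 r"
  have "compact K" unfolding K_def by (intro compact_Times compact_cball)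
  then have "compact (F ` K)" using contF KS by (intro compact_continuous_image) (auto simp: K_def intro: continuous_on_subset)
  then obtain M where M: "M > 0" "\<And>y. y \<in> F ` K \<Longrightarrow> norm y \<le> M"
    using compact_imp_bounded bounded_pos by metis
  have MK: "norm (F (z,p)) \<le> M" if "z \<in> cball z0 r" "p \<in> cball p0 r" for z p
    using M(2) that by (auto simp: K_def)
  define c where "c i p = (deriv ^^ i) (\<lambda>z. F (z,p)) z0 / fact i" for i p
  have holz: "(\<lambda>z. F (z,p)) holomorphic_on ball z0 r" if "p \<in> cball p0 r" for p
    by (rule holo_of_fd, rule dz) (use KS that in auto)
  have contz: "continuous_on (cball z0 r) (\<lambda>z. F (z,p))" if "p \<in> cball p0 r" for p
  proof -
    have "continuous_on (cball z0 r) (F \<circ> (\<lambda>z. (z,p)))"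
      by (rule continuous_on_compose) (use KS that in \<open>auto intro!: continuous_intros continuous_on_subset[OF contF]\<close>)
    then show ?thesis by (simp add: o_def)
  qed
  have sumz: "(\<lambda>i. c i p * (z - z0)^i) sums F (z,p)" if "p \<in> cball p0 r" "z \<in> ball z0 r" for p z
    unfolding c_def using holomorphic_power_series[OF holz[OF that(1)] that(2)] by simp
  have cbound: "norm (c i p) \<le> M / r^i" if "p \<in> cball p0 r" for i p
  proof -
    have "norm ((deriv ^^ i) (\<lambda>z. F (z,p)) z0) \<le> fact i * M / r^i"
      by (rule Cauchy_inequality[OF holz[OF that] contz[OF that] r]) (use that in \<open>auto intro!: MK simp: dist_norm\<close>)
    then show ?thesis by (simp add: c_def norm_divide field_simps)
  qed
  have holc: "c i holomorphic_on ball p0 r" for i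
  proof -
    have eqc: "c i p = contour_integral (circlepath z0 r) (\<lambda>\<zeta>. F (\<zeta>,p) / (\<zeta> - z0) ^ Suc i) / (2 * pi * \<i>)"
      if "p \<in> ball p0 r" for p
    proof -
      have "((\<lambda>\<zeta>. F (\<zeta>,p) / (\<zeta> - z0) ^ Suc i) has_contour_integral
          ((2 * pi * \<i>) / (fact i) * (deriv ^^ i) (\<lambda>z. F (z,p)) z0)) (circlepath z0 r)"
        by (rule Cauchy_has_contour_integral_higher_derivative_circlepath) (use that r contz holz in auto)
      then show ?thesis by (simp add: contour_integral_unique c_def field_simps)
    qed
    have contH: "continuous_on (sphere z0 r \<times> ball p0 r) (\<lambda>(\<zeta>,p). F (\<zeta>,p) / (\<zeta> - z0) ^ Suc i)"
    proof -
      have c1: "continuous_on (sphere z0 r \<times> ball p0 r) F"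
        by (rule continuous_on_subset[OF contF]) (use KS in auto)
      have c2: "continuous_on (sphere z0 r \<times> ball p0 r) (\<lambda>x. (fst x - z0) ^ Suc i)"
        by (intro continuous_intros)
      have "\<forall>x\<in>sphere z0 r \<times> ball p0 r. (fst x - z0) ^ Suc i \<noteq> 0" using r by auto
      from continuous_on_divide[OF c1 c2 this] show ?thesis by (simp add: case_prod_unfold)
    qed
    have holH: "(\<lambda>p. F (\<zeta>,p) / (\<zeta> - z0) ^ Suc i) holomorphic_on ball p0 r" if "\<zeta> \<in> sphere z0 r" for \<zeta>
    proof (rule holo_of_fd)
      fix p assume "p \<in> ball p0 r"
      then have "(\<zeta>,p) \<in> S" using KS that by auto
      then show "(\<lambda>p. F (\<zeta>,p) / (\<zeta> - z0) ^ Suc i) field_differentiable at p"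
        using dp that r by (intro field_differentiable_divide) auto
    qed
    have "(\<lambda>p. contour_integral (circlepath z0 r) (\<lambda>\<zeta>. F (\<zeta>,p) / (\<zeta> - z0) ^ Suc i)) holomorphic_on ball p0 r"
      by (rule cint_param_holo[OF open_ball r contH holH])
    then have "(\<lambda>p. contour_integral (circlepath z0 r) (\<lambda>\<zeta>. F (\<zeta>,p) / (\<zeta> - z0) ^ Suc i) / (2 * pi * \<i>)) holomorphic_on ball p0 r"
      by (intro holomorphic_intros) auto
    then show ?thesis by (rule holomorphic_transform) (simp add: eqc)
  qed
  define t where "t = r/2"
  have t: "t > 0" "t < r" using r by (auto simp: t_def)
  define b where "b i j = (deriv ^^ j) (c i) p0 / fact j" for i j
  have sump: "(\<lambda>j. b i j * (p - p0)^j) sums c i p" if "p \<in> ball p0 r" for i p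
    unfolding b_def using holomorphic_power_series[OF holc that] by simp
  have bbound: "norm (b i j) \<le> M / r^i / t^j" for i j
  proof -
    have sub: "cball p0 t \<subseteq> ball p0 r" using t by auto
    have "norm ((deriv ^^ j) (c i) p0) \<le> fact j * (M / r^i) / t^j"
    proof (rule Cauchy_inequality)
      show "c i holomorphic_on ball p0 t" using holc sub by (meson ball_subset_cball holomorphic_on_subset order_trans)
      show "continuous_on (cball p0 t) (c i)" using holc sub holomorphic_on_imp_continuous_on holomorphic_on_subset by blast
      show "norm (c i x) \<le> M / r^i" if "norm (p0 - x) = t" for x
        using that t by (intro cbound) (auto simp: dist_norm)
    qed (use t in auto)
    then show ?thesis by (simp add: b_def norm_divide field_simps)
  qed
  show "\<exists>e>0. \<exists>a :: nat \<Rightarrow> nat \<Rightarrow> complex. \<forall>x. dist x w < e \<longrightarrow>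
          ((\<lambda>(i,j). a i j * (fst x - fst w) ^ i * (snd x - snd w) ^ j) has_sum F x) UNIV"
  proof (intro exI[of _ "r/4"] exI[of _ b] conjI allI impI)
    show "r/4 > 0" using r by simp
    fix x assume dx: "dist x w < r/4"
    obtain z p where x: "x = (z,p)" by fastforce
    have nz: "norm (z - z0) < r/4" using dx dist_fst_le[of x w] by (simp add: x w dist_norm)
    have np: "norm (p - p0) < r/4" using dx dist_snd_le[of x w] by (simp add: x w dist_norm)
    have zin: "z \<in> ball z0 r" using nz r by (simp add: dist_norm norm_minus_commute)
    have pin: "p \<in> ball p0 r" using np r by (simp add: dist_norm norm_minus_commute)
    define T where "T = (\<lambda>(i,j). b i j * (z - z0) ^ i * (p - p0) ^ j)"
    have Tb: "norm (T (i,j)) \<le> M * ((1/4)^i * (1/2)^j)" for i j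
    proof -
      have "norm (T (i,j)) = norm (b i j) * norm (z - z0)^i * norm (p - p0)^j"
        by (simp add: T_def norm_mult norm_power)
      also have "\<dots> \<le> (M / r^i / t^j) * (r/4)^i * (t/2)^j"
        using nz np r t M(1) by (intro mult_mono power_mono bbound) (auto simp: t_def)
      also have "\<dots> = M * ((1/4)^i * (1/2)^j)"
        using r t by (simp add: power_divide field_simps)
      finally show ?thesis .
    qed
    have "(\<lambda>(i,j). M * ((1/4::real)^i * (1/2)^j)) summable_on UNIV"
      using summable_on_cmult_right[OF geom2_summable[of "1/4" "1/2"]] by (simp add: case_prod_unfold)
    then have "(\<lambda>x. norm (T x)) summable_on UNIV"
      by (rule Infinite_Sum.abs_summable_on_comparison_test') (use Tb in \<open>auto simp: case_prod_unfold\<close>)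
    then have Tsum: "T summable_on UNIV" by (rule abs_summable_summable)
    have inner: "((\<lambda>j. T (i,j)) has_sum (c i p * (z - z0)^i)) UNIV" for i
    proof -
      have "summable (\<lambda>j. norm (b i j * (p - p0)^j))"
      proof (rule summable_comparison_test[of _ "\<lambda>j. (M / r^i) * (1/2)^j"])
        show "summable (\<lambda>j. M / r ^ i * (1 / 2) ^ j)" by (intro summable_mult summable_geometric) auto
        have "norm (b i j * (p - p0)^j) \<le> M / r^i * (1/2)^j" for j
        proof -
          have "norm (b i j * (p - p0)^j) = norm (b i j) * norm (p - p0)^j" by (simp add: norm_mult norm_power)
          also have "\<dots> \<le> (M / r^i / t^j) * (t/2)^j"
            using np r t M(1) by (intro mult_mono power_mono bbound) (auto simp: t_def)
          also have "\<dots> = M / r^i * (1/2)^j" using t by (simp add: power_divide field_simps)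
          finally show ?thesis .
        qed
        then show "\<exists>N. \<forall>n\<ge>N. norm (norm (b i n * (p - p0) ^ n)) \<le> M / r ^ i * (1 / 2) ^ n" by auto
      qed
      from norm_summable_imp_has_sum[OF this sump[OF pin]]
      have "((\<lambda>j. (z - z0)^i * (b i j * (p - p0)^j)) has_sum ((z - z0)^i * c i p)) UNIV"
        by (rule has_sum_cmult_right)
      then show ?thesis by (simp add: T_def mult_ac)
    qed
    have outer: "((\<lambda>i. c i p * (z - z0)^i) has_sum F (z,p)) UNIV"
    proof (rule norm_summable_imp_has_sum[OF _ sumz])
      show "summable (\<lambda>i. norm (c i p * (z - z0)^i))"
      proof (rule summable_comparison_test[of _ "\<lambda>i. M * (1/4)^i"])
        show "summable (\<lambda>i. M * (1/4::real)^i)" by (intro summable_mult summable_geometric) auto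
        have "norm (c i p * (z - z0)^i) \<le> M * (1/4)^i" for i
        proof -
          have "norm (c i p * (z - z0)^i) = norm (c i p) * norm (z - z0)^i" by (simp add: norm_mult norm_power)
          also have "\<dots> \<le> (M / r^i) * (r/4)^i"
            using nz r pin M(1) by (intro mult_mono power_mono cbound) auto
          also have "\<dots> = M * (1/4)^i" using r by (simp add: power_divide field_simps)
          finally show ?thesis .
        qed
        then show "\<exists>N. \<forall>n\<ge>N. norm (norm (c n p * (z - z0) ^ n)) \<le> M * (1/4) ^ n" by auto
      qed
    qed (use pin zin in auto)
    have "(T has_sum F (z,p)) (Sigma UNIV (\<lambda>_. UNIV))"
      by (rule has_sum_SigmaI[OF inner outer]) (use Tsum in auto)
    then show "((\<lambda>(i,j). b i j * (fst x - fst w) ^ i * (snd x - snd w) ^ j) has_sum F x) UNIV"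
      by (simp add: T_def x w)
  qed
qed

definition Bq :: "complex poly \<Rightarrow> nat \<Rightarrow> complex \<Rightarrow> complex" where
  "Bq Q j \<zeta> = (\<Sum>k = Suc j..degree Q. coeff Q k * \<zeta> ^ (k - Suc j))"

lemma Bq_alg: "poly Q z - poly Q \<zeta> = (z - \<zeta>) * (\<Sum>j<degree Q. Bq Q j \<zeta> * z ^ j)"
  unfolding Bq_def poly_altdef by (simp add: sub_polyfun sum_distrib_left sum_distrib_right mult_ac)

lemma continuous_on_Bq [continuous_intros]: "continuous_on A (\<lambda>\<zeta>. Bq Q j \<zeta>)"
  unfolding Bq_def by (intro continuous_intros)

lemma per_circle:
  assumes s: "0 < s" and cF: "continuous_on (sphere c s) F"
    and nzQ: "\<And>\<zeta>. \<zeta> \<in> sphere c s \<Longrightarrow> poly Q \<zeta> \<noteq> 0" and z: "z \<notin> sphere c s"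
  shows "contour_integral (circlepath c s) (\<lambda>\<zeta>. F \<zeta> / (\<zeta> - z)) =
    (\<Sum>j<degree Q. contour_integral (circlepath c s) (\<lambda>\<zeta>. F \<zeta> * Bq Q j \<zeta> / poly Q \<zeta>) * z ^ j) +
    poly Q z * contour_integral (circlepath c s) (\<lambda>\<zeta>. F \<zeta> / (poly Q \<zeta> * (\<zeta> - z)))"
proof -
  have pim: "path_image (circlepath c s) = sphere c s" using s by (simp add: path_image_circlepath_nonneg)
  have nzz: "\<zeta> - z \<noteq> 0" if "\<zeta> \<in> sphere c s" for \<zeta> using that z by auto
  have i1: "(\<lambda>\<zeta>. F \<zeta> * Bq Q j \<zeta> / poly Q \<zeta>) contour_integrable_on (circlepath c s)" for j
    by (rule contour_integrable_continuous_circlepath, unfold pim)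
       (intro continuous_intros cF, use nzQ in auto)
  have i2: "(\<lambda>\<zeta>. F \<zeta> / (poly Q \<zeta> * (\<zeta> - z))) contour_integrable_on (circlepath c s)"
    by (rule contour_integrable_continuous_circlepath, unfold pim)
       (intro continuous_intros cF, use nzQ nzz in auto)
  have pt: "F \<zeta> / (\<zeta> - z) = (\<Sum>j<degree Q. F \<zeta> * Bq Q j \<zeta> / poly Q \<zeta> * z ^ j) +
      poly Q z * (F \<zeta> / (poly Q \<zeta> * (\<zeta> - z)))" if "\<zeta> \<in> sphere c s" for \<zeta>
  proof -
    have a: "(\<Sum>j<degree Q. F \<zeta> * Bq Q j \<zeta> / poly Q \<zeta> * z ^ j) = F \<zeta> / poly Q \<zeta> * (\<Sum>j<degree Q. Bq Q j \<zeta> * z ^ j)"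
      by (simp add: sum_distrib_left mult_ac)
    have b: "(\<Sum>j<degree Q. Bq Q j \<zeta> * z ^ j) = (poly Q \<zeta> - poly Q z) / (\<zeta> - z)"
      using Bq_alg[of Q z \<zeta>] nzz[OF that] by (simp add: field_simps)
    have "F \<zeta> / poly Q \<zeta> * ((poly Q \<zeta> - poly Q z) / (\<zeta> - z)) + poly Q z * (F \<zeta> / (poly Q \<zeta> * (\<zeta> - z)))
        = (F \<zeta> * (poly Q \<zeta> - poly Q z) + poly Q z * F \<zeta>) / (poly Q \<zeta> * (\<zeta> - z))"
      by (simp add: add_divide_distrib times_divide_times_eq)
    also have "F \<zeta> * (poly Q \<zeta> - poly Q z) + poly Q z * F \<zeta> = F \<zeta> * poly Q \<zeta>" by (simp add: algebra_simps)
    also have "F \<zeta> * poly Q \<zeta> / (poly Q \<zeta> * (\<zeta> - z)) = F \<zeta> / (\<zeta> - z)" using nzQ[OF that] by simp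
    finally show ?thesis unfolding a b by simp
  qed
  have "contour_integral (circlepath c s) (\<lambda>\<zeta>. F \<zeta> / (\<zeta> - z)) =
     contour_integral (circlepath c s) (\<lambda>\<zeta>. (\<Sum>j<degree Q. F \<zeta> * Bq Q j \<zeta> / poly Q \<zeta> * z ^ j) +
      poly Q z * (F \<zeta> / (poly Q \<zeta> * (\<zeta> - z))))"
    by (rule contour_integral_eq, rule pt) (metis pim)
  also have "\<dots> = contour_integral (circlepath c s) (\<lambda>\<zeta>. \<Sum>j<degree Q. F \<zeta> * Bq Q j \<zeta> / poly Q \<zeta> * z ^ j) +
      contour_integral (circlepath c s) (\<lambda>\<zeta>. poly Q z * (F \<zeta> / (poly Q \<zeta> * (\<zeta> - z))))"
  proof (rule contour_integral_add)
    show "(\<lambda>\<zeta>. \<Sum>j<degree Q. F \<zeta> * Bq Q j \<zeta> / poly Q \<zeta> * z ^ j) contour_integrable_on (circlepath c s)"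
    proof (rule contour_integrable_sum)
      fix j show "(\<lambda>\<zeta>. F \<zeta> * Bq Q j \<zeta> / poly Q \<zeta> * z ^ j) contour_integrable_on (circlepath c s)"
        by (rule contour_integrable_rmul[OF i1])
    qed simp
    show "(\<lambda>\<zeta>. poly Q z * (F \<zeta> / (poly Q \<zeta> * (\<zeta> - z)))) contour_integrable_on (circlepath c s)"
      by (rule contour_integrable_lmul[OF i2])
  qed
  also have "contour_integral (circlepath c s) (\<lambda>\<zeta>. \<Sum>j<degree Q. F \<zeta> * Bq Q j \<zeta> / poly Q \<zeta> * z ^ j) =
      (\<Sum>j<degree Q. contour_integral (circlepath c s) (\<lambda>\<zeta>. F \<zeta> * Bq Q j \<zeta> / poly Q \<zeta> * z ^ j))"
  proof (rule contour_integral_sum)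
    fix j show "(\<lambda>\<zeta>. F \<zeta> * Bq Q j \<zeta> / poly Q \<zeta> * z ^ j) contour_integrable_on (circlepath c s)"
      by (rule contour_integrable_rmul[OF i1])
  qed simp
  also have "\<dots> = (\<Sum>j<degree Q. contour_integral (circlepath c s) (\<lambda>\<zeta>. F \<zeta> * Bq Q j \<zeta> / poly Q \<zeta>) * z ^ j)"
    by (intro sum.cong refl contour_integral_rmul i1)
  also have "contour_integral (circlepath c s) (\<lambda>\<zeta>. poly Q z * (F \<zeta> / (poly Q \<zeta> * (\<zeta> - z)))) =
      poly Q z * contour_integral (circlepath c s) (\<lambda>\<zeta>. F \<zeta> / (poly Q \<zeta> * (\<zeta> - z)))"
    by (rule contour_integral_lmul[OF i2])
  finally show ?thesis .
qed

lemma cont_eq_off_point: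
  fixes f g :: "complex \<Rightarrow> complex"
  assumes A: "open A" and cf: "continuous_on A f" and cg: "continuous_on A g" and w: "w \<in> A"
    and eq: "\<And>z. z \<in> A \<Longrightarrow> z \<noteq> w \<Longrightarrow> f z = g z"
  shows "f w = g w"
proof -
  have "(f \<longlongrightarrow> f w) (at w)" using cf A w by (meson continuous_on_eq_continuous_at isContD)
  moreover have "(g \<longlongrightarrow> g w) (at w)" using cg A w by (meson continuous_on_eq_continuous_at isContD)
  moreover have "eventually (\<lambda>z. f z = g z) (at w)"
    using eventually_at_topological A w eq by blast
  ultimately have "(g \<longlongrightarrow> f w) (at w)" by (metis (mono_tags) Lim_transform_eventually)
  then show ?thesis using \<open>(g \<longlongrightarrow> g w) (at w)\<close> tendsto_unique at_neq_bot by blast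
qed

definition lin_prod :: "complex list \<Rightarrow> complex poly" where
  "lin_prod ws = prod_list (map (\<lambda>w. [:-w, 1:]) ws)"

lemma lin_prod_simps [simp]: "lin_prod [] = 1" "lin_prod (w # ws) = [:-w, 1:] * lin_prod ws"
  by (simp_all add: lin_prod_def)

lemma poly_lin_prod: "poly (lin_prod ws) z = prod_list (map (\<lambda>w. z - w) ws)"
  by (induction ws) (auto simp: algebra_simps)

lemma lin_prod_nz: "lin_prod ws \<noteq> 0"
proof (induction ws)
  case (Cons w ws)
  have "[:-w,1:] \<noteq> (0::complex poly)" by simp
  then show ?case using Cons by (simp only: lin_prod_simps mult_eq_0_iff) simp
qed simp

lemma degree_lin_prod: "degree (lin_prod ws) = length ws"
proof (induction ws)
  case (Cons w ws)
  then show ?case using lin_prod_nz[of ws] by (subst lin_prod_simps, subst degree_mult_eq) auto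
qed simp

lemma uniq_aux:
  assumes A: "open A" and ws: "set ws \<subseteq> A" and D: "D = 0 \<or> degree D < length ws"
    and H: "continuous_on A H" and eq: "\<And>z. z \<in> A \<Longrightarrow> poly D z = H z * poly (lin_prod ws) z"
  shows "D = 0 \<and> (\<forall>z\<in>A. H z = 0)"
  using ws D H eq
proof (induction ws arbitrary: D H)
  case Nil
  then have "D = 0" by auto
  then show ?case using Nil.prems(4) by auto
next
  case (Cons w ws)
  have wA: "w \<in> A" using Cons.prems(1) by simp
  have "poly D w = 0" using Cons.prems(4)[OF wA] by (simp add: poly_lin_prod)
  then obtain D' where D': "D = [:-w, 1:] * D'" using poly_eq_0_iff_dvd by (metis dvdE)
  have pD: "poly D z = (z - w) * poly D' z" for z unfolding D' by (simp add: algebra_simps)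
  have pL: "poly (lin_prod (w # ws)) z = (z - w) * poly (lin_prod ws) z" for z by (simp add: poly_lin_prod algebra_simps)
  have deg: "D' = 0 \<or> degree D' < length ws"
  proof (cases "D' = 0")
    case False
    then have "degree D = Suc (degree D')" unfolding D' by (subst degree_mult_eq) auto
    moreover have "D \<noteq> 0" using calculation by auto
    ultimately show ?thesis using Cons.prems(2) by simp
  qed simp
  have eq': "poly D' z = H z * poly (lin_prod ws) z" if z: "z \<in> A" for z
  proof (cases "z = w")
    case False
    from Cons.prems(4)[OF z] have "(z - w) * poly D' z = H z * ((z - w) * poly (lin_prod ws) z)"
      by (simp only: pD pL)
    then have e1: "(z - w) * poly D' z = (z - w) * (H z * poly (lin_prod ws) z)"
      by (simp only: mult.left_commute)
    have "z - w \<noteq> 0" using False by simp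
    then show ?thesis using e1 by (metis mult_cancel_left)
  next
    case True
    have "poly D' w = H w * poly (lin_prod ws) w"
    proof (rule cont_eq_off_point[OF A _ _ wA])
      show "continuous_on A (poly D')" by (intro continuous_intros)
      show "continuous_on A (\<lambda>z. H z * poly (lin_prod ws) z)" by (intro continuous_intros Cons.prems(3))
      fix y assume y: "y \<in> A" "y \<noteq> w"
      from Cons.prems(4)[OF y(1)] have "(y - w) * poly D' y = H y * ((y - w) * poly (lin_prod ws) y)"
        by (simp only: pD pL)
      then have e1: "(y - w) * poly D' y = (y - w) * (H y * poly (lin_prod ws) y)"
        by (simp only: mult.left_commute)
      have "y - w \<noteq> 0" using y by simp
      then show "poly D' y = H y * poly (lin_prod ws) y" using e1 by (metis mult_cancel_left)
    qed
    then show ?thesis using True by simp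
  qed
  from Cons.IH[OF _ deg Cons.prems(3) eq'] Cons.prems(1) have "D' = 0 \<and> (\<forall>z\<in>A. H z = 0)" by simp
  then show ?case using D' by simp
qed

lemma poly_div_unique:
  assumes A: "open A" and ws: "set ws \<subseteq> A"
    and R1: "R1 = 0 \<or> degree R1 < length ws" and R2: "R2 = 0 \<or> degree R2 < length ws"
    and h1: "continuous_on A h1" and h2: "continuous_on A h2"
    and e1: "\<And>z. z \<in> A \<Longrightarrow> F z - poly R1 z = h1 z * poly (lin_prod ws) z"
    and e2: "\<And>z. z \<in> A \<Longrightarrow> F z - poly R2 z = h2 z * poly (lin_prod ws) z"
  shows "R1 = R2 \<and> (\<forall>z\<in>A. h1 z = h2 z)"
proof -
  have D: "R2 - R1 = 0 \<or> degree (R2 - R1) < length ws"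
  proof (cases "length ws = 0")
    case True then show ?thesis using R1 R2 by auto
  next
    case False
    have "degree (R2 - R1) \<le> max (degree R2) (degree R1)" by (rule degree_diff_le_max)
    then show ?thesis using R1 R2 False by auto
  qed
  have "R2 - R1 = 0 \<and> (\<forall>z\<in>A. h1 z - h2 z = 0)"
  proof (rule uniq_aux[OF A ws D])
    show "continuous_on A (\<lambda>z. h1 z - h2 z)" by (intro continuous_intros h1 h2)
    fix z assume "z \<in> A"
    from e1[OF this] e2[OF this] show "poly (R2 - R1) z = (h1 z - h2 z) * poly (lin_prod ws) z"
      by (simp add: algebra_simps)
  qed
  then show ?thesis by simp
qed

definition Gq :: "(complex \<Rightarrow> complex) \<Rightarrow> (complex \<Rightarrow> complex) \<Rightarrow> complex set \<Rightarrow> real \<Rightarrow> complex \<Rightarrow> complex" where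
  "Gq F U C s z = (\<Sum>c\<in>C. contour_integral (circlepath c s) (\<lambda>\<zeta>. F \<zeta> / (U \<zeta> * (\<zeta> - z))) / (2 * of_real pi * \<i>))"

locale circ_setup =
  fixes Om :: "complex set" and C :: "complex set" and \<rho> :: real and s :: real
  assumes Om: "open Om" and C: "finite C" "C \<subseteq> Om" and \<rho>: "\<rho> > 0"
    and balls: "\<And>c. c \<in> C \<Longrightarrow> cball c (4*\<rho>) \<subseteq> Om"
    and sep: "\<And>c c'. c \<in> C \<Longrightarrow> c' \<in> C \<Longrightarrow> c \<noteq> c' \<Longrightarrow> dist c c' > 8*\<rho>"
    and s: "2*\<rho> \<le> s" "s \<le> 3*\<rho>"
begin

lemma s_pos: "s > 0" using \<rho> s by simp

lemma pim: "path_image (circlepath c s) = sphere c s"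
  using s_pos by (simp add: path_image_circlepath_nonneg)

lemma sphere_far:
  assumes c: "c \<in> C" and c': "c' \<in> C" and z: "dist c z = s"
  shows "dist z c' \<ge> \<rho>"
proof (cases "c = c'")
  case True then show ?thesis using z s \<rho> by (simp add: dist_commute)
next
  case False
  have "dist c c' \<le> dist c z + dist z c'" by (rule dist_triangle)
  then show ?thesis using sep[OF c c' False] z s by linarith
qed

lemma ball_far:
  assumes c: "c \<in> C" and c': "c' \<in> C" and ne: "c \<noteq> c'" and z: "dist z c < s"
  shows "dist z c' > s"
proof -
  have "dist c c' \<le> dist c z + dist z c'" by (rule dist_triangle)
  then show ?thesis using sep[OF c c' ne] z s by (simp add: dist_commute)
qed

lemma sphere_sub: "c \<in> C \<Longrightarrow> sphere c s \<subseteq> Om"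
  using balls[of c] s \<rho> by auto

lemma cball_sub: "c \<in> C \<Longrightarrow> cball c s \<subseteq> Om"
  using balls[of c] s \<rho> by auto

lemma cint_zero:
  assumes c: "c \<in> C" and holF: "F holomorphic_on Om" and z: "dist z c > s"
  shows "contour_integral (circlepath c s) (\<lambda>\<zeta>. F \<zeta> / (\<zeta> - z)) = 0"
proof -
  define s' where "s' = min (dist z c) (4*\<rho>)"
  have "((\<lambda>\<zeta>. F \<zeta> / (\<zeta> - z)) has_contour_integral 0) (circlepath c s)"
  proof (rule Cauchy_theorem_convex_simple)
    have sub: "ball c s' \<subseteq> Om" using balls[OF c] by (auto simp: s'_def)
    have "z \<notin> ball c s'" by (auto simp: s'_def dist_commute)
    then show "(\<lambda>\<zeta>. F \<zeta> / (\<zeta> - z)) holomorphic_on ball c s'"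
      using sub holF by (auto intro!: holomorphic_intros elim: holomorphic_on_subset)
    show "path_image (circlepath c s) \<subseteq> ball c s'"
      using z s \<rho> by (auto simp: pim s'_def)
  qed auto
  then show ?thesis by (rule contour_integral_unique)
qed

lemma cint_in:
  assumes c: "c \<in> C" and holF: "F holomorphic_on Om" and z: "dist z c < s"
  shows "contour_integral (circlepath c s) (\<lambda>\<zeta>. F \<zeta> / (\<zeta> - z)) = 2 * of_real pi * \<i> * F z"
proof (rule contour_integral_unique, rule Cauchy_integral_circlepath)
  show "continuous_on (cball c s) F"
    using holF cball_sub[OF c] holomorphic_on_imp_continuous_on holomorphic_on_subset by blast
  show "F holomorphic_on ball c s"
    using holF cball_sub[OF c] by (meson ball_subset_cball holomorphic_on_subset order_trans)
  show "cmod (z - c) < s" using z by (simp add: dist_norm)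
qed

lemma I1_in:
  assumes c: "c \<in> C" and holF: "F holomorphic_on Om" and z: "dist z c < s"
  shows "(\<Sum>c\<in>C. contour_integral (circlepath c s) (\<lambda>\<zeta>. F \<zeta> / (\<zeta> - z))) = 2 * of_real pi * \<i> * F z"
proof -
  have "(\<Sum>c\<in>C. contour_integral (circlepath c s) (\<lambda>\<zeta>. F \<zeta> / (\<zeta> - z))) =
      contour_integral (circlepath c s) (\<lambda>\<zeta>. F \<zeta> / (\<zeta> - z)) +
      (\<Sum>c'\<in>C - {c}. contour_integral (circlepath c' s) (\<lambda>\<zeta>. F \<zeta> / (\<zeta> - z)))"
    using C(1) c by (simp add: sum.remove)
  also have "(\<Sum>c'\<in>C - {c}. contour_integral (circlepath c' s) (\<lambda>\<zeta>. F \<zeta> / (\<zeta> - z))) = 0"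
    by (rule sum.neutral) (use cint_zero ball_far c holF z in blast)
  finally show ?thesis using cint_in[OF c holF z] by simp
qed

lemma I1_out:
  assumes holF: "F holomorphic_on Om" and z: "\<And>c. c \<in> C \<Longrightarrow> dist z c > s"
  shows "(\<Sum>c\<in>C. contour_integral (circlepath c s) (\<lambda>\<zeta>. F \<zeta> / (\<zeta> - z))) = 0"
  by (rule sum.neutral) (use cint_zero holF z in blast)

lemma constr:
  assumes holF: "F holomorphic_on Om"
    and nz: "\<And>z. (\<And>c. c \<in> C \<Longrightarrow> dist z c \<ge> \<rho>) \<Longrightarrow> poly Q z \<noteq> 0"
  defines "G \<equiv> \<lambda>z. \<Sum>c\<in>C. contour_integral (circlepath c s) (\<lambda>\<zeta>. F \<zeta> / (poly Q \<zeta> * (\<zeta> - z))) / (2 * of_real pi * \<i>)"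
  shows "\<exists>R. (R = 0 \<or> degree R < degree Q) \<and>
     (\<forall>z\<in>Om. (\<exists>c\<in>C. dist z c < s) \<longrightarrow> F z - poly R z = poly Q z * G z) \<and>
     (\<forall>z\<in>Om. (\<forall>c\<in>C. dist z c > s) \<longrightarrow> poly R z = - (poly Q z * G z))"
proof -
  define \<kappa> :: complex where "\<kappa> = 2 * of_real pi * \<i>"
  have \<kappa>: "\<kappa> \<noteq> 0" by (simp add: \<kappa>_def)
  have nzQ: "poly Q \<zeta> \<noteq> 0" if "c \<in> C" "\<zeta> \<in> sphere c s" for c \<zeta>
    by (rule nz) (use sphere_far that in auto)
  define dc where "dc c j = contour_integral (circlepath c s) (\<lambda>\<zeta>. F \<zeta> * Bq Q j \<zeta> / poly Q \<zeta>)" for c j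
  define Gc where "Gc c z = contour_integral (circlepath c s) (\<lambda>\<zeta>. F \<zeta> / (poly Q \<zeta> * (\<zeta> - z)))" for c z
  define d where "d j = (\<Sum>c\<in>C. dc c j) / \<kappa>" for j
  define R where "R = (\<Sum>j<degree Q. monom (d j) j)"
  have polyR: "poly R z = (\<Sum>j<degree Q. d j * z ^ j)" for z
    by (simp add: R_def poly_sum poly_monom)
  have degR: "R = 0 \<or> degree R < degree Q"
  proof (cases "degree Q = 0")
    case True then show ?thesis by (simp add: R_def)
  next
    case False
    have "degree R \<le> degree Q - 1"
      unfolding R_def by (rule degree_sum_le) (auto intro: order_trans[OF degree_monom_le])
    then show ?thesis using False by linarith
  qed
  have G_eq: "G z = (\<Sum>c\<in>C. Gc c z) / \<kappa>" for z
    by (simp add: G_def Gc_def \<kappa>_def sum_divide_distrib)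
  have key: "(\<Sum>c\<in>C. contour_integral (circlepath c s) (\<lambda>\<zeta>. F \<zeta> / (\<zeta> - z))) / \<kappa> = poly R z + poly Q z * G z"
    if z: "\<And>c. c \<in> C \<Longrightarrow> dist z c \<noteq> s" for z
  proof -
    have pc: "contour_integral (circlepath c s) (\<lambda>\<zeta>. F \<zeta> / (\<zeta> - z)) =
        (\<Sum>j<degree Q. dc c j * z ^ j) + poly Q z * Gc c z" if c: "c \<in> C" for c
      unfolding dc_def Gc_def
    proof (rule per_circle[OF s_pos])
      show "continuous_on (sphere c s) F"
        using holF sphere_sub[OF c] holomorphic_on_imp_continuous_on holomorphic_on_subset by blast
      show "\<And>\<zeta>. \<zeta> \<in> sphere c s \<Longrightarrow> poly Q \<zeta> \<noteq> 0" using nzQ[OF c] by blast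
      show "z \<notin> sphere c s" using z[OF c] by (simp add: dist_commute)
    qed
    have "(\<Sum>c\<in>C. contour_integral (circlepath c s) (\<lambda>\<zeta>. F \<zeta> / (\<zeta> - z))) =
        (\<Sum>c\<in>C. \<Sum>j<degree Q. dc c j * z ^ j) + poly Q z * (\<Sum>c\<in>C. Gc c z)"
      by (simp add: pc sum.distrib sum_distrib_left)
    also have "(\<Sum>c\<in>C. \<Sum>j<degree Q. dc c j * z ^ j) = (\<Sum>j<degree Q. (\<Sum>c\<in>C. dc c j) * z ^ j)"
      by (simp add: sum.swap[of _ C] sum_distrib_right)
    finally have "(\<Sum>c\<in>C. contour_integral (circlepath c s) (\<lambda>\<zeta>. F \<zeta> / (\<zeta> - z))) / \<kappa> =
        (\<Sum>j<degree Q. (\<Sum>c\<in>C. dc c j) * z ^ j) / \<kappa> + poly Q z * ((\<Sum>c\<in>C. Gc c z) / \<kappa>)"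
      by (simp add: add_divide_distrib)
    also have "(\<Sum>j<degree Q. (\<Sum>c\<in>C. dc c j) * z ^ j) / \<kappa> = poly R z"
      by (simp add: polyR d_def sum_divide_distrib[symmetric])
    finally show ?thesis by (simp add: G_eq)
  qed
  show ?thesis
  proof (intro exI[of _ R] conjI degR ballI impI)
    fix z assume zO: "z \<in> Om" and "\<exists>c\<in>C. dist z c < s"
    then obtain c0 where c0: "c0 \<in> C" "dist z c0 < s" by blast
    have zs: "dist z c \<noteq> s" if "c \<in> C" for c
      using ball_far[OF c0(1) that _ c0(2)] c0(2) by (cases "c = c0") auto
    have "(\<Sum>c\<in>C. contour_integral (circlepath c s) (\<lambda>\<zeta>. F \<zeta> / (\<zeta> - z))) / \<kappa> = F z"
      using I1_in[OF c0(1) holF c0(2)] \<kappa> by (simp add: \<kappa>_def)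
    with key[OF zs] show "F z - poly R z = poly Q z * G z" by simp
  next
    fix z assume zO: "z \<in> Om" and far: "\<forall>c\<in>C. dist z c > s"
    have "(\<Sum>c\<in>C. contour_integral (circlepath c s) (\<lambda>\<zeta>. F \<zeta> / (\<zeta> - z))) = 0"
      using I1_out[OF holF] far by blast
    with key[of z] far show "poly R z = - (poly Q z * G z)"
      by (auto simp: eq_neg_iff_add_eq_0)
  qed
qed

lemma G_holo:
  assumes holF: "F holomorphic_on Om"
    and nz: "\<And>z. (\<And>c. c \<in> C \<Longrightarrow> dist z c \<ge> \<rho>) \<Longrightarrow> poly Q z \<noteq> 0"
  shows "Gq F (poly Q) C s holomorphic_on (\<Union>c\<in>C. ball c s)"
proof -
  have nzQ: "poly Q \<zeta> \<noteq> 0" if "c \<in> C" "\<zeta> \<in> sphere c s" for c \<zeta>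
    by (rule nz) (use sphere_far that in auto)
  have "(\<lambda>z. contour_integral (circlepath c s) (\<lambda>\<zeta>. F \<zeta> / (poly Q \<zeta> * (\<zeta> - z))) / (2 * of_real pi * \<i>))
      holomorphic_on (\<Union>c\<in>C. ball c s)" if c: "c \<in> C" for c
  proof -
    have sub: "(\<Union>c\<in>C. ball c s) \<subseteq> - sphere c s"
    proof clarify
      fix c' z assume c': "c' \<in> C" and z: "z \<in> ball c' s" and zs: "z \<in> sphere c s"
      show False
      proof (cases "c = c'")
        case True then show False using z zs by auto
      next
        case False
        have "dist z c > s" by (rule ball_far[OF c' c]) (use False z in \<open>auto simp: dist_commute\<close>)
        then show False using zs by (simp add: dist_commute)
      qed
    qed
    have "(\<lambda>z. contour_integral (circlepath c s) (\<lambda>\<zeta>. F \<zeta> / (poly Q \<zeta> * (\<zeta> - z)))) holomorphic_on (- sphere c s)"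
    proof (rule cint_param_holo[OF _ s_pos])
      show "open (- sphere c s)" by (simp add: open_Compl)
      have cF: "continuous_on (sphere c s) F"
        using holF sphere_sub[OF c] holomorphic_on_imp_continuous_on holomorphic_on_subset by blast
      have c1: "continuous_on (sphere c s \<times> - sphere c s) (\<lambda>x. F (fst x))"
        by (rule continuous_on_compose2[OF cF]) (auto intro!: continuous_intros)
      have c2: "continuous_on (sphere c s \<times> - sphere c s) (\<lambda>x. poly Q (fst x) * (fst x - snd x))"
        by (intro continuous_intros)
      have "\<forall>x\<in>sphere c s \<times> - sphere c s. poly Q (fst x) * (fst x - snd x) \<noteq> 0"
        using nzQ[OF c] by auto
      from continuous_on_divide[OF c1 c2 this]
      show "continuous_on (sphere c s \<times> - sphere c s) (\<lambda>(\<zeta>, z). F \<zeta> / (poly Q \<zeta> * (\<zeta> - z)))"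
        by (simp add: case_prod_unfold)
      fix \<zeta> assume z: "\<zeta> \<in> sphere c s"
      show "(\<lambda>z. F \<zeta> / (poly Q \<zeta> * (\<zeta> - z))) holomorphic_on - sphere c s"
        using nzQ[OF c z] z by (auto intro!: holomorphic_intros)
    qed
    then show ?thesis using sub by (auto intro!: holomorphic_intros elim: holomorphic_on_subset)
  qed
  then show ?thesis unfolding Gq_def by (intro holomorphic_on_sum) auto
qed

lemma constr2:
  assumes holF: "F holomorphic_on Om"
    and nz: "\<And>z. (\<And>c. c \<in> C \<Longrightarrow> dist z c \<ge> \<rho>) \<Longrightarrow> poly Q z \<noteq> 0"
  shows "\<exists>R h. (R = 0 \<or> degree R < degree Q) \<and> h holomorphic_on Om \<and>
     (\<forall>z\<in>Om. F z - poly R z = h z * poly Q z) \<and>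
     (\<forall>z\<in>Om. (\<exists>c\<in>C. dist z c < s) \<longrightarrow> h z = Gq F (poly Q) C s z \<and> F z - poly R z = poly Q z * Gq F (poly Q) C s z) \<and>
     (\<forall>z\<in>Om. (\<forall>c\<in>C. dist z c > s) \<longrightarrow> poly R z = - (poly Q z * Gq F (poly Q) C s z))"
proof -
  let ?G = "Gq F (poly Q) C s"
  from constr[OF holF nz] obtain R where degR: "R = 0 \<or> degree R < degree Q"
    and inb: "\<And>z. z \<in> Om \<Longrightarrow> (\<exists>c\<in>C. dist z c < s) \<Longrightarrow> F z - poly R z = poly Q z * ?G z"
    and outb: "\<And>z. z \<in> Om \<Longrightarrow> (\<forall>c\<in>C. dist z c > s) \<Longrightarrow> poly R z = - (poly Q z * ?G z)"
    unfolding Gq_def by blast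
  define h where "h z = (if (\<exists>c\<in>C. dist z c < s) then ?G z else (F z - poly R z) / poly Q z)" for z
  define U1 where "U1 = Om \<inter> (\<Union>c\<in>C. ball c s)"
  define V where "V = Om - (\<Union>c\<in>C. cball c \<rho>)"
  have oU1: "open U1" unfolding U1_def using Om by (intro open_Int open_UN) auto
  have oV: "open V" unfolding V_def using Om C(1) by (intro open_Diff closed_UN) auto
  have cover: "Om \<subseteq> U1 \<union> V"
  proof
    fix z assume z: "z \<in> Om"
    show "z \<in> U1 \<union> V"
    proof (cases "\<exists>c\<in>C. dist z c < s")
      case True then show ?thesis using z by (auto simp: U1_def dist_commute)
    next
      case False then show ?thesis using z s \<rho> by (force simp: V_def dist_commute)
    qed
  qed
  have hU1: "h holomorphic_on U1"
  proof (rule holomorphic_transform[where f="?G"])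
    show "?G holomorphic_on U1" using G_holo[OF holF nz] by (auto simp: U1_def elim: holomorphic_on_subset)
    show "\<And>x. x \<in> U1 \<Longrightarrow> ?G x = h x" by (auto simp: U1_def h_def dist_commute)
  qed
  have nzV: "poly Q z \<noteq> 0" if "z \<in> V" for z
    using that by (intro nz) (force simp: V_def dist_commute)
  have hV: "h holomorphic_on V"
  proof (rule holomorphic_transform[where f="\<lambda>z. (F z - poly R z) / poly Q z"])
    show "(\<lambda>z. (F z - poly R z) / poly Q z) holomorphic_on V"
      using holF nzV by (auto intro!: holomorphic_intros elim: holomorphic_on_subset simp: V_def)
    fix z assume z: "z \<in> V"
    show "(F z - poly R z) / poly Q z = h z"
    proof (cases "\<exists>c\<in>C. dist z c < s")
      case True
      have "F z - poly R z = poly Q z * ?G z" using inb True z by (auto simp: V_def)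
      then show ?thesis using True nzV[OF z] by (simp add: h_def)
    next
      case False then show ?thesis by (simp add: h_def)
    qed
  qed
  have hol: "h holomorphic_on Om"
    using holomorphic_on_Un[OF hU1 hV oU1 oV] cover holomorphic_on_subset by blast
  have eq: "F z - poly R z = h z * poly Q z" if z: "z \<in> Om" for z
  proof (cases "\<exists>c\<in>C. dist z c < s")
    case True then show ?thesis using inb[OF z True] by (simp add: h_def mult.commute)
  next
    case False
    then have "z \<in> V" using z cover by (auto simp: U1_def dist_commute)
    then show ?thesis using False nzV by (simp add: h_def)
  qed
  show ?thesis
    by (rule exI[of _ R], rule exI[of _ h]) (use degR hol eq inb outb in \<open>auto simp: h_def\<close>)
qed

end

lemma sephol_subset: "sephol S F \<Longrightarrow> T \<subseteq> S \<Longrightarrow> sephol T F"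
  unfolding sephol_def by (auto intro: continuous_on_subset)

lemma sephol_add: "sephol S F \<Longrightarrow> sephol S G \<Longrightarrow> sephol S (\<lambda>x. F x + G x)"
  unfolding sephol_def by (auto intro!: continuous_intros field_differentiable_add)

lemma sephol_diff: "sephol S F \<Longrightarrow> sephol S G \<Longrightarrow> sephol S (\<lambda>x. F x - G x)"
  unfolding sephol_def by (auto intro!: continuous_intros field_differentiable_diff)

lemma sephol_mult: "sephol S F \<Longrightarrow> sephol S G \<Longrightarrow> sephol S (\<lambda>x. F x * G x)"
  unfolding sephol_def by (auto intro!: continuous_intros field_differentiable_mult)

lemma sephol_uminus: "sephol S F \<Longrightarrow> sephol S (\<lambda>x. - F x)"
  unfolding sephol_def by (auto intro!: continuous_intros field_differentiable_minus)

lemma sephol_divide: "sephol S F \<Longrightarrow> sephol S G \<Longrightarrow> (\<And>x. x \<in> S \<Longrightarrow> G x \<noteq> 0) \<Longrightarrow> sephol S (\<lambda>x. F x / G x)"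
  unfolding sephol_def by (auto intro!: continuous_intros field_differentiable_divide)

lemma analytic2_body:
  assumes N: "open N" and w: "w \<in> N" and sh: "sephol N F'" and eq: "\<And>x. x \<in> N \<Longrightarrow> F x = F' x"
  shows "\<exists>e>0. \<exists>a :: nat \<Rightarrow> nat \<Rightarrow> complex. \<forall>x. dist x w < e \<longrightarrow>
          ((\<lambda>(i,j). a i j * (fst x - fst w) ^ i * (snd x - snd w) ^ j) has_sum F x) UNIV"
proof -
  have "analytic2_on F' N" by (rule sephol_analytic2[OF N sh])
  with w obtain e and a :: "nat \<Rightarrow> nat \<Rightarrow> complex" where e: "e > 0" and
    hs: "\<forall>x. dist x w < e \<longrightarrow> ((\<lambda>(i,j). a i j * (fst x - fst w) ^ i * (snd x - snd w) ^ j) has_sum F' x) UNIV"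
    unfolding analytic2_on_def by blast
  obtain d where d: "d > 0" "ball w d \<subseteq> N" using N w open_contains_ball by blast
  show ?thesis
  proof (intro exI[of _ "min e d"] exI[of _ a] conjI allI impI)
    show "min e d > 0" using e d by simp
    fix x assume x: "dist x w < min e d"
    then have xN: "x \<in> N" using d by (auto simp: dist_commute)
    have "((\<lambda>(i,j). a i j * (fst x - fst w) ^ i * (snd x - snd w) ^ j) has_sum F' x) UNIV"
      using hs x by (meson min_less_iff_conj)
    then show "((\<lambda>(i,j). a i j * (fst x - fst w) ^ i * (snd x - snd w) ^ j) has_sum F x) UNIV"
      by (simp only: eq[OF xN])
  qed
qed

lemma wbound:
  fixes \<alpha> :: "nat \<Rightarrow> complex \<Rightarrow> complex"
  assumes an: "\<And>i. i < K \<Longrightarrow> isCont (\<alpha> i) 0" and a0: "\<And>i. i < K \<Longrightarrow> \<alpha> i 0 = 0" and \<rho>: "\<rho> > 0"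
  shows "\<exists>\<delta>>0. \<forall>q w. norm q < \<delta> \<longrightarrow> norm w \<ge> \<rho> \<longrightarrow> w ^ K + (\<Sum>i<K. \<alpha> i q * w ^ i) \<noteq> 0"
proof -
  define \<mu> where "\<mu> = min 1 \<rho>"
  have \<mu>: "\<mu> > 0" "\<mu> \<le> 1" "\<mu> \<le> \<rho>" using \<rho> by (auto simp: \<mu>_def)
  define \<eta> where "\<eta> = \<mu> ^ K / (K + 1)"
  have \<eta>: "\<eta> > 0" using \<mu> by (simp add: \<eta>_def)
  have ev: "eventually (\<lambda>q. norm (\<alpha> i q) < \<eta>) (at 0)" if i: "i < K" for i
  proof -
    have "(\<alpha> i \<longlongrightarrow> 0) (at 0)" using an[OF i] a0[OF i] by (simp add: isCont_def)
    then show ?thesis using \<eta> by (auto simp: tendsto_iff dist_norm)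
  qed
  have "eventually (\<lambda>q. \<forall>i\<in>{..<K}. norm (\<alpha> i q) < \<eta>) (at (0::complex))"
    by (rule eventually_ball_finite) (use ev in auto)
  then obtain \<delta> where \<delta>: "\<delta> > 0" and \<delta>D: "\<And>q. q \<noteq> 0 \<Longrightarrow> dist q 0 < \<delta> \<Longrightarrow> \<forall>i<K. norm (\<alpha> i q) < \<eta>"
    unfolding eventually_at by auto
  have small: "norm (\<alpha> i q) \<le> \<eta>" if "norm q < \<delta>" "i < K" for i q
  proof (cases "q = 0")
    case True then show ?thesis using a0[OF that(2)] \<eta> by simp
  next
    case False then show ?thesis using \<delta>D[of q] that by (auto simp: dist_norm less_imp_le)
  qed
  show ?thesis
  proof (intro exI[of _ \<delta>] conjI allI impI \<delta>)
    fix q w :: complex assume q: "norm q < \<delta>" and w: "norm w \<ge> \<rho>"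
    define t where "t = norm w"
    have t: "t \<ge> \<rho>" "t > 0" using w \<rho> by (auto simp: t_def)
    have ti: "t ^ i * \<mu> ^ K \<le> t ^ K" if "i < K" for i
    proof -
      have "\<mu> ^ K \<le> \<mu> ^ (K - i)" using \<mu> by (intro power_decreasing) auto
      also have "\<dots> \<le> t ^ (K - i)" using \<mu> t by (intro power_mono) auto
      finally have "t ^ i * \<mu> ^ K \<le> t ^ i * t ^ (K - i)" using t by (intro mult_left_mono) auto
      also have "\<dots> = t ^ K" using that by (simp add: power_add[symmetric])
      finally show ?thesis .
    qed
    have "norm (\<Sum>i<K. \<alpha> i q * w ^ i) \<le> (\<Sum>i<K. \<eta> * t ^ i)"
    proof -
      have "norm (\<Sum>i<K. \<alpha> i q * w ^ i) \<le> (\<Sum>i<K. norm (\<alpha> i q * w ^ i))" by (rule norm_sum)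
      also have "\<dots> \<le> (\<Sum>i<K. \<eta> * t ^ i)"
        by (rule sum_mono) (use small q in \<open>auto simp: norm_mult norm_power t_def intro!: mult_right_mono\<close>)
      finally show ?thesis .
    qed
    also have "\<dots> \<le> (\<Sum>i<K. \<eta> * (t ^ K / \<mu> ^ K))"
    proof (rule sum_mono)
      fix i assume "i \<in> {..<K}"
      then have "t ^ i \<le> t ^ K / \<mu> ^ K" using ti[of i] \<mu> by (simp add: field_simps)
      then show "\<eta> * t ^ i \<le> \<eta> * (t ^ K / \<mu> ^ K)" using \<eta> by (intro mult_left_mono) auto
    qed
    also have "\<dots> = K / (K + 1) * t ^ K" using \<mu> by (simp add: \<eta>_def field_simps)
    also have "\<dots> < t ^ K" using t by (simp add: field_simps)
    finally have lt: "norm (\<Sum>i<K. \<alpha> i q * w ^ i) < norm (w ^ K)" by (simp add: t_def norm_power)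
    show "w ^ K + (\<Sum>i<K. \<alpha> i q * w ^ i) \<noteq> 0"
    proof
      assume "w ^ K + (\<Sum>i<K. \<alpha> i q * w ^ i) = 0"
      then have "(\<Sum>i<K. \<alpha> i q * w ^ i) = - (w ^ K)" by (simp add: add_eq_0_iff)
      then show False using lt by simp
    qed
  qed
qed

lemma roots_list:
  fixes zs :: "nat \<Rightarrow> complex" and kk :: "nat \<Rightarrow> nat"
  shows "\<exists>ws. set ws \<subseteq> zs ` {..<k} \<and> (\<forall>z. prod_list (map (\<lambda>w. z - w) ws) = (\<Prod>j<k. (z - zs j) ^ kk j))"
proof (induction k)
  case 0 then show ?case by (intro exI[of _ "[]"]) auto
next
  case (Suc k)
  then obtain ws where ws: "set ws \<subseteq> zs ` {..<k}" "\<forall>z. prod_list (map (\<lambda>w. z - w) ws) = (\<Prod>j<k. (z - zs j) ^ kk j)"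
    by blast
  show ?case
  proof (intro exI[of _ "ws @ replicate (kk k) (zs k)"] conjI allI)
    show "set (ws @ replicate (kk k) (zs k)) \<subseteq> zs ` {..<Suc k}" using ws(1) by auto
    fix z show "prod_list (map (\<lambda>w. z - w) (ws @ replicate (kk k) (zs k))) = (\<Prod>j<Suc k. (z - zs j) ^ kk j)"
      using ws(2) by (simp add: prod_list_replicate)
  qed
qed

lemma ev_small: "(b::real) > 0 \<Longrightarrow> eventually (\<lambda>y. y < b) (at_right 0)"
  by (auto simp: eventually_at_right_field intro!: exI[of _ b])

lemma ev_pos_ex: "eventually P (at_right (0::real)) \<Longrightarrow> \<exists>y>0. P y"
  by (auto simp: eventually_at_right_field) (metis field_lbound_gt_zero less_numeral_extra(1))

lemma weier_at:
  assumes "weierstrass_poly_at v z0 p0"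
  shows "\<exists>K \<alpha>. (\<forall>i<K. isCont (\<alpha> i) 0 \<and> \<alpha> i 0 = 0) \<and>
      (\<forall>z q. v (z, q) = (z - z0) ^ K + (\<Sum>i<K. \<alpha> i (q - p0) * (z - z0) ^ i))"
proof -
  from assms obtain K and \<alpha> :: "nat \<Rightarrow> complex \<Rightarrow> complex" where
    a: "\<forall>j<K. \<alpha> j analytic_on {0} \<and> \<alpha> j 0 = 0" and
    e: "\<forall>z p. v (z + z0, p + p0) = z ^ K + (\<Sum>j<K. \<alpha> j p * z ^ j)"
    unfolding weierstrass_poly_at_def weierstrass_poly_def by auto
  have "isCont (\<alpha> i) 0" if "i < K" for i
    using a that analytic_on_imp_differentiable_at field_differentiable_imp_continuous_at by blast
  moreover have "v (z, q) = (z - z0) ^ K + (\<Sum>i<K. \<alpha> i (q - p0) * (z - z0) ^ i)" for z q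
    using e[rule_format, of "z - z0" "q - p0"] by simp
  ultimately show ?thesis using a by blast
qed

locale L4 =
  fixes Om Pi_set :: "complex set" and f u :: "complex \<times> complex \<Rightarrow> complex" and m :: nat
  assumes oOm: "open Om" and cOm: "connected Om" and neOm: "Om \<noteq> {}"
    and oPi: "open Pi_set" and cPi: "connected Pi_set" and nePi: "Pi_set \<noteq> {}"
    and anf: "analytic2_on f (Om \<times> Pi_set)" and anu: "analytic2_on u (Om \<times> Pi_set)"
    and upoly: "\<forall>p\<in>Pi_set. \<exists>q :: complex poly. degree q = m \<and> (\<forall>z. u (z, p) = poly q z)"
    and weier: "\<forall>pi0\<in>Pi_set. \<exists>k::nat. \<exists>zs :: nat \<Rightarrow> complex. \<exists>us :: nat \<Rightarrow> complex \<times> complex \<Rightarrow> complex.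
           (\<forall>j<k. zs j \<in> Om \<and> analytic2_on (us j) {(zs j, pi0)} \<and> weierstrass_poly_at (us j) (zs j) pi0) \<and>
           (\<exists>e>0. \<forall>p\<in>ball pi0 e. \<forall>z. u (z, p) = (\<Prod>j<k. us j (z, p)))"
begin

lemma oS: "open (Om \<times> Pi_set)" using oOm oPi by (rule open_Times)

lemma sh_f: "sephol (Om \<times> Pi_set) f" by (rule analytic2_sephol[OF oS anf])
lemma sh_u: "sephol (Om \<times> Pi_set) u" by (rule analytic2_sephol[OF oS anu])

lemma contf: "continuous_on (Om \<times> Pi_set) f" using sh_f by (simp add: sephol_def)
lemma contu: "continuous_on (Om \<times> Pi_set) u" using sh_u by (simp add: sephol_def)

lemma holf: "p \<in> Pi_set \<Longrightarrow> (\<lambda>z. f (z,p)) holomorphic_on Om"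
  using sh_f by (intro holo_of_fd) (auto simp: sephol_def)

definition Q :: "complex \<Rightarrow> complex poly" where
  "Q p = (SOME q. degree q = m \<and> (\<forall>z. u (z, p) = poly q z))"

lemma Q: assumes "p \<in> Pi_set" shows "degree (Q p) = m \<and> (\<forall>z. u (z, p) = poly (Q p) z)"
  unfolding Q_def by (rule someI_ex) (use upoly assms in blast)

lemma polyQ: "p \<in> Pi_set \<Longrightarrow> poly (Q p) = (\<lambda>z. u (z,p))"
  using Q by auto

lemma degQ: "p \<in> Pi_set \<Longrightarrow> degree (Q p) = m"
  using Q by auto

lemma roots: "p \<in> Pi_set \<Longrightarrow> \<exists>ws. set ws \<subseteq> Om \<and> Q p = lin_prod ws \<and> length ws = m"
proof -
  assume p: "p \<in> Pi_set"
  from weier p obtain k :: nat and zs :: "nat \<Rightarrow> complex" and us :: "nat \<Rightarrow> complex \<times> complex \<Rightarrow> complex" and e :: real where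
    j: "\<forall>j<k. zs j \<in> Om \<and> analytic2_on (us j) {(zs j, p)} \<and> weierstrass_poly_at (us j) (zs j) p"
    and e: "e > 0" and pr: "\<forall>q\<in>ball p e. \<forall>z. u (z, q) = (\<Prod>j<k. us j (z, q))"
    by blast
  have "\<forall>j. j < k \<longrightarrow> (\<exists>K. \<forall>z. us j (z,p) = (z - zs j) ^ K)"
  proof (intro allI impI)
    fix j assume "j < k"
    with j have "weierstrass_poly_at (us j) (zs j) p" by blast
    from weier_at[OF this] obtain K \<alpha> where
      a: "\<forall>i<K. isCont (\<alpha> i) 0 \<and> \<alpha> i 0 = 0" and
      v: "\<forall>z q. us j (z, q) = (z - zs j) ^ K + (\<Sum>i<K. \<alpha> i (q - p) * (z - zs j) ^ i)"
      by blast
    have "us j (z,p) = (z - zs j) ^ K" for z using v a by simp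
    then show "\<exists>K. \<forall>z. us j (z,p) = (z - zs j) ^ K" by blast
  qed
  then obtain KK where KK: "\<And>j z. j < k \<Longrightarrow> us j (z,p) = (z - zs j) ^ KK j" by metis
  obtain ws where ws: "set ws \<subseteq> zs ` {..<k}" "\<forall>z. prod_list (map (\<lambda>w. z - w) ws) = (\<Prod>j<k. (z - zs j) ^ KK j)"
    using roots_list by blast
  have "poly (lin_prod ws) z = poly (Q p) z" for z
  proof -
    have "poly (lin_prod ws) z = (\<Prod>j<k. (z - zs j) ^ KK j)" using ws(2) by (simp add: poly_lin_prod)
    also have "\<dots> = (\<Prod>j<k. us j (z,p))" by (intro prod.cong refl) (simp add: KK)
    also have "\<dots> = u (z,p)" using pr e by simp
    also have "\<dots> = poly (Q p) z" using Q[OF p] by simp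
    finally show ?thesis .
  qed
  then have eq: "Q p = lin_prod ws" by (metis poly_eq_poly_eq_iff ext)
  have "set ws \<subseteq> Om" using ws(1) j by auto
  moreover have "length ws = m" using degree_lin_prod[of ws] eq degQ[OF p] by simp
  ultimately show ?thesis using eq by blast
qed

lemma loc_setup:
  assumes pi0: "pi0 \<in> Pi_set"
  shows "\<exists>C \<rho> \<delta>. finite C \<and> C \<subseteq> Om \<and> \<rho> > 0 \<and> (\<forall>c\<in>C. cball c (4*\<rho>) \<subseteq> Om) \<and>
     (\<forall>c\<in>C. \<forall>c'\<in>C. c \<noteq> c' \<longrightarrow> dist c c' > 8*\<rho>) \<and> \<delta> > 0 \<and> ball pi0 \<delta> \<subseteq> Pi_set \<and>
     (\<forall>p\<in>ball pi0 \<delta>. \<forall>z. (\<forall>c\<in>C. dist z c \<ge> \<rho>) \<longrightarrow> u (z,p) \<noteq> 0)"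
proof -
  from weier pi0 obtain k :: nat and zs :: "nat \<Rightarrow> complex" and us :: "nat \<Rightarrow> complex \<times> complex \<Rightarrow> complex" and e0 :: real where
    j: "\<forall>j<k. zs j \<in> Om \<and> analytic2_on (us j) {(zs j, pi0)} \<and> weierstrass_poly_at (us j) (zs j) pi0"
    and e0: "e0 > 0" and pr: "\<forall>q\<in>ball pi0 e0. \<forall>z. u (z, q) = (\<Prod>j<k. us j (z, q))"
    by blast
  define C where "C = zs ` {..<k}"
  have finC: "finite C" and COm: "C \<subseteq> Om" using j by (auto simp: C_def)
  have ev1: "eventually (\<lambda>\<rho>. \<forall>c\<in>C. cball c (4*\<rho>) \<subseteq> Om) (at_right 0)"
  proof (rule eventually_ball_finite[OF finC], rule ballI)
    fix c assume "c \<in> C"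
    then obtain r where r: "r > 0" "cball c r \<subseteq> Om" using COm oOm open_contains_cball by blast
    show "eventually (\<lambda>\<rho>. cball c (4*\<rho>) \<subseteq> Om) (at_right 0)"
      using ev_small[of "r/4"] r by (auto elim!: eventually_mono)
  qed
  have ev2: "eventually (\<lambda>\<rho>. \<forall>x\<in>C \<times> C. fst x \<noteq> snd x \<longrightarrow> dist (fst x) (snd x) > 8*\<rho>) (at_right 0)"
  proof (rule eventually_ball_finite, use finC in simp, rule ballI)
    fix x assume "x \<in> C \<times> C"
    show "eventually (\<lambda>\<rho>. fst x \<noteq> snd x \<longrightarrow> dist (fst x) (snd x) > 8*\<rho>) (at_right 0)"
    proof (cases "fst x = snd x")
      case False
      then have "dist (fst x) (snd x) / 8 > 0" by simp
      from ev_small[OF this] show ?thesis by (auto elim!: eventually_mono)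
    qed simp
  qed
  from ev_pos_ex[OF eventually_conj[OF ev1 ev2]] obtain \<rho> where \<rho>: "\<rho> > 0"
    and balls: "\<forall>c\<in>C. cball c (4*\<rho>) \<subseteq> Om"
    and sep0: "\<forall>x\<in>C \<times> C. fst x \<noteq> snd x \<longrightarrow> dist (fst x) (snd x) > 8*\<rho>" by blast
  have sep: "\<forall>c\<in>C. \<forall>c'\<in>C. c \<noteq> c' \<longrightarrow> dist c c' > 8*\<rho>" using sep0 by auto
  have ev3: "eventually (\<lambda>\<delta>. \<forall>j\<in>{..<k}. \<forall>q w. norm q < \<delta> \<longrightarrow> norm w \<ge> \<rho> \<longrightarrow> us j (zs j + w, pi0 + q) \<noteq> 0) (at_right 0)"
  proof (rule eventually_ball_finite, simp, rule ballI)
    fix jj assume "jj \<in> {..<k}"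
    with j have "weierstrass_poly_at (us jj) (zs jj) pi0" by blast
    from weier_at[OF this] obtain K \<alpha> where
      a: "\<forall>i<K. isCont (\<alpha> i) 0 \<and> \<alpha> i 0 = 0" and
      v: "\<forall>z q. us jj (z, q) = (z - zs jj) ^ K + (\<Sum>i<K. \<alpha> i (q - pi0) * (z - zs jj) ^ i)"
      by blast
    from wbound[of K \<alpha> \<rho>] a \<rho> obtain d where d: "d > 0"
      and dD: "\<forall>q w. norm q < d \<longrightarrow> norm w \<ge> \<rho> \<longrightarrow> w ^ K + (\<Sum>i<K. \<alpha> i q * w ^ i) \<noteq> 0" by blast
    show "eventually (\<lambda>\<delta>. \<forall>q w. norm q < \<delta> \<longrightarrow> norm w \<ge> \<rho> \<longrightarrow> us jj (zs jj + w, pi0 + q) \<noteq> 0) (at_right 0)"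
      using ev_small[OF d] by (rule eventually_mono) (use dD v in auto)
  qed
  obtain d0 where d0: "d0 > 0" "ball pi0 d0 \<subseteq> Pi_set" using oPi pi0 open_contains_ball by blast
  have ev4: "eventually (\<lambda>\<delta>. \<delta> < min d0 e0) (at_right 0)" by (rule ev_small) (use d0 e0 in simp)
  from ev_pos_ex[OF eventually_conj[OF ev3 ev4]] obtain \<delta> where \<delta>: "\<delta> > 0"
    and nzj: "\<forall>j\<in>{..<k}. \<forall>q w. norm q < \<delta> \<longrightarrow> norm w \<ge> \<rho> \<longrightarrow> us j (zs j + w, pi0 + q) \<noteq> 0"
    and \<delta>m: "\<delta> < min d0 e0" by blast
  have ballPi: "ball pi0 \<delta> \<subseteq> Pi_set" using d0 \<delta>m by auto
  have nz: "u (z,p) \<noteq> 0" if p: "p \<in> ball pi0 \<delta>" and z: "\<forall>c\<in>C. dist z c \<ge> \<rho>" for p z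
  proof -
    have "p \<in> ball pi0 e0" using p \<delta>m by auto
    then have "u (z,p) = (\<Prod>j<k. us j (z,p))" using pr by blast
    moreover have "us j (z,p) \<noteq> 0" if jk: "j < k" for j
    proof -
      have "norm (p - pi0) < \<delta>" using p by (simp add: dist_norm norm_minus_commute)
      moreover have "norm (z - zs j) \<ge> \<rho>" using z jk by (auto simp: C_def dist_norm)
      ultimately have "us j (zs j + (z - zs j), pi0 + (p - pi0)) \<noteq> 0" using nzj jk by blast
      then show ?thesis by simp
    qed
    ultimately show ?thesis by simp
  qed
  show ?thesis
    by (intro exI[of _ C] exI[of _ \<rho>] exI[of _ \<delta>]) (use finC COm \<rho> balls sep \<delta> ballPi nz in auto)
qed

end

lemma sephol_sum: "(\<And>i. i \<in> I \<Longrightarrow> sephol S (F i)) \<Longrightarrow> sephol S (\<lambda>x. \<Sum>i\<in>I. F i x)"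
  unfolding sephol_def by (auto intro!: continuous_intros field_differentiable_sum)

lemma sephol_const: "sephol S (\<lambda>x. c)"
  unfolding sephol_def by auto

lemma sephol_cdiv: "sephol S F \<Longrightarrow> c \<noteq> 0 \<Longrightarrow> sephol S (\<lambda>x. F x / c)"
  using sephol_divide[of S F "\<lambda>x. c"] sephol_const by auto

lemma circ_ok:
  assumes "finite C" "C \<subseteq> Om" "open Om" "\<rho> > 0" "\<forall>c\<in>C. cball c (4*\<rho>) \<subseteq> Om"
    "\<forall>c\<in>C. \<forall>c'\<in>C. c \<noteq> c' \<longrightarrow> dist c c' > 8*\<rho>" "2*\<rho> \<le> s" "s \<le> 3*\<rho>"
  shows "circ_setup Om C \<rho> s"
  by unfold_locales (use assms in auto)

context L4
begin

definition Pp where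
  "Pp p R h \<longleftrightarrow> (R = 0 \<or> degree R < m) \<and> h holomorphic_on Om \<and> (\<forall>z\<in>Om. f (z,p) - poly R z = h z * u (z,p))"

lemma uniq:
  assumes p: "p \<in> Pi_set" and P1: "Pp p R1 h1" and P2: "Pp p R2 h2"
  shows "R1 = R2 \<and> (\<forall>z\<in>Om. h1 z = h2 z)"
proof -
  from roots[OF p] obtain ws where ws: "set ws \<subseteq> Om" "Q p = lin_prod ws" "length ws = m" by blast
  have uw: "u (z,p) = poly (lin_prod ws) z" for z using Q[OF p] ws(2) by simp
  show ?thesis
  proof (rule poly_div_unique[OF oOm ws(1), where F="\<lambda>z. f (z,p)"])
    show "R1 = 0 \<or> degree R1 < length ws" "R2 = 0 \<or> degree R2 < length ws"
      using P1 P2 ws(3) by (auto simp: Pp_def)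
    show "continuous_on Om h1" "continuous_on Om h2"
      using P1 P2 by (auto simp: Pp_def intro: holomorphic_on_imp_continuous_on)
    show "\<And>z. z \<in> Om \<Longrightarrow> f (z,p) - poly R1 z = h1 z * poly (lin_prod ws) z"
      "\<And>z. z \<in> Om \<Longrightarrow> f (z,p) - poly R2 z = h2 z * poly (lin_prod ws) z"
      using P1 P2 by (auto simp: Pp_def uw[symmetric])
  qed
qed

definition GG where "GG C s = (\<lambda>(z,p). Gq (\<lambda>\<zeta>. f (\<zeta>,p)) (\<lambda>\<zeta>. u (\<zeta>,p)) C s z)"

lemma exist_local:
  assumes cs: "circ_setup Om C \<rho> s" and \<delta>: "ball pi0 \<delta> \<subseteq> Pi_set"
    and nz: "\<forall>p\<in>ball pi0 \<delta>. \<forall>z. (\<forall>c\<in>C. dist z c \<ge> \<rho>) \<longrightarrow> u (z,p) \<noteq> 0" and p: "p \<in> ball pi0 \<delta>"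
  shows "\<exists>R h. Pp p R h \<and>
     (\<forall>z\<in>Om. (\<exists>c\<in>C. dist z c < s) \<longrightarrow> h z = GG C s (z,p) \<and> f (z,p) - poly R z = u (z,p) * GG C s (z,p)) \<and>
     (\<forall>z\<in>Om. (\<forall>c\<in>C. dist z c > s) \<longrightarrow> poly R z = - (u (z,p) * GG C s (z,p)))"
proof -
  have pPi: "p \<in> Pi_set" using p \<delta> by auto
  have nzQ: "poly (Q p) z \<noteq> 0" if "\<And>c. c \<in> C \<Longrightarrow> dist z c \<ge> \<rho>" for z
    using nz p that polyQ[OF pPi] by auto
  from circ_setup.constr2[OF cs holf[OF pPi] nzQ]
  obtain R h where R: "R = 0 \<or> degree R < degree (Q p)" and h: "h holomorphic_on Om"
    and e: "\<forall>z\<in>Om. f (z,p) - poly R z = h z * poly (Q p) z"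
    and i: "\<forall>z\<in>Om. (\<exists>c\<in>C. dist z c < s) \<longrightarrow> h z = Gq (\<lambda>z. f (z,p)) (poly (Q p)) C s z \<and>
          f (z,p) - poly R z = poly (Q p) z * Gq (\<lambda>z. f (z,p)) (poly (Q p)) C s z"
    and o: "\<forall>z\<in>Om. (\<forall>c\<in>C. dist z c > s) \<longrightarrow> poly R z = - (poly (Q p) z * Gq (\<lambda>z. f (z,p)) (poly (Q p)) C s z)"
    by blast
  show ?thesis
    by (rule exI[of _ R], rule exI[of _ h])
       (use R h e i o degQ[OF pPi] polyQ[OF pPi] in \<open>auto simp: Pp_def GG_def\<close>)
qed

definition sel where "sel p = (SOME x. Pp p (fst x) (snd x))"
definition Rsel where "Rsel p = fst (sel p)"
definition hsel where "hsel p = snd (sel p)"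

lemma Pp_sel:
  assumes p: "p \<in> Pi_set" shows "Pp p (Rsel p) (hsel p)"
proof -
  from loc_setup[OF p] obtain C \<rho> \<delta> where
    d: "finite C" "C \<subseteq> Om" "\<rho> > 0" "\<forall>c\<in>C. cball c (4*\<rho>) \<subseteq> Om"
    "\<forall>c\<in>C. \<forall>c'\<in>C. c \<noteq> c' \<longrightarrow> dist c c' > 8*\<rho>" "\<delta> > 0" "ball p \<delta> \<subseteq> Pi_set"
    "\<forall>q\<in>ball p \<delta>. \<forall>z. (\<forall>c\<in>C. dist z c \<ge> \<rho>) \<longrightarrow> u (z,q) \<noteq> 0" by blast
  have cs: "circ_setup Om C \<rho> (2*\<rho>)" by (rule circ_ok) (use d oOm in auto)
  have "p \<in> ball p \<delta>" using d(6) by simp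
  from exist_local[OF cs d(7) d(8) this] obtain R h where "Pp p R h" by blast
  then have "Pp p (fst (R,h)) (snd (R,h))" by simp
  then have "Pp p (fst (sel p)) (snd (sel p))" unfolding sel_def by (rule someI)
  then show ?thesis by (simp add: Rsel_def hsel_def)
qed

lemma GG_sephol:
  assumes cs: "circ_setup Om C \<rho> s" and \<delta>: "ball pi0 \<delta> \<subseteq> Pi_set"
    and nz: "\<forall>p\<in>ball pi0 \<delta>. \<forall>z. (\<forall>c\<in>C. dist z c \<ge> \<rho>) \<longrightarrow> u (z,p) \<noteq> 0"
  shows "sephol ((Om - (\<Union>c\<in>C. sphere c s)) \<times> ball pi0 \<delta>) (GG C s)"
proof -
  interpret circ_setup Om C \<rho> s by (rule cs)
  define N where "N = (Om - (\<Union>c\<in>C. sphere c s)) \<times> ball pi0 \<delta>"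
  have oN: "open N" unfolding N_def using oOm C(1) by (intro open_Times open_Diff closed_UN) auto
  define T where "T c x = contour_integral (circlepath c s) (\<lambda>\<zeta>. f (\<zeta>, snd x) / (u (\<zeta>, snd x) * (\<zeta> - fst x)))" for c x
  have nzs: "u (\<zeta>,p) \<noteq> 0" if "c \<in> C" "\<zeta> \<in> sphere c s" "p \<in> ball pi0 \<delta>" for c \<zeta> p
    using nz that sphere_far[OF that(1)] by auto
  have shT: "sephol N (T c)" if c: "c \<in> C" for c
  proof -
    have sOm: "sphere c s \<subseteq> Om" by (rule sphere_sub[OF c])
    have cont: "continuous_on N (T c)"
      unfolding T_def
    proof (rule cint_param_cont[OF oN s_pos])
      have c1: "continuous_on (sphere c s \<times> N) (\<lambda>y. f (fst y, snd (snd y)))"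
        by (rule continuous_on_compose2[OF contf]) (use sOm \<delta> in \<open>auto intro!: continuous_intros simp: N_def\<close>)
      have c2: "continuous_on (sphere c s \<times> N) (\<lambda>y. u (fst y, snd (snd y)) * (fst y - fst (snd y)))"
        by (intro continuous_intros continuous_on_compose2[OF contu]) (use sOm \<delta> in \<open>auto simp: N_def\<close>)
      have "\<forall>y\<in>sphere c s \<times> N. u (fst y, snd (snd y)) * (fst y - fst (snd y)) \<noteq> 0"
        using nzs[OF c] c by (auto simp: N_def)
      from continuous_on_divide[OF c1 c2 this]
      show "continuous_on (sphere c s \<times> N) (\<lambda>(\<zeta>, x). f (\<zeta>, snd x) / (u (\<zeta>, snd x) * (\<zeta> - fst x)))"
        by (simp add: case_prod_unfold)
    qed
    have dz: "(\<lambda>z. T c (z,p)) field_differentiable at z" if zp: "(z,p) \<in> N" for z p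
    proof -
      have pPi: "p \<in> Pi_set" using zp \<delta> by (auto simp: N_def)
      have "(\<lambda>z. contour_integral (circlepath c s) (\<lambda>\<zeta>. f (\<zeta>, p) / (u (\<zeta>, p) * (\<zeta> - z)))) holomorphic_on (- sphere c s)"
      proof (rule cint_param_holo[OF _ s_pos])
        show "open (- sphere c s)" by (simp add: open_Compl)
        have c1: "continuous_on (sphere c s \<times> - sphere c s) (\<lambda>y. f (fst y, p))"
          by (rule continuous_on_compose2[OF contf]) (use sOm pPi in \<open>auto intro!: continuous_intros\<close>)
        have c2: "continuous_on (sphere c s \<times> - sphere c s) (\<lambda>y. u (fst y, p) * (fst y - snd y))"
          by (intro continuous_intros continuous_on_compose2[OF contu]) (use sOm pPi in auto)
        have "\<forall>y\<in>sphere c s \<times> - sphere c s. u (fst y, p) * (fst y - snd y) \<noteq> 0"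
          using nzs[OF c] zp by (auto simp: N_def)
        from continuous_on_divide[OF c1 c2 this]
        show "continuous_on (sphere c s \<times> - sphere c s) (\<lambda>(\<zeta>, z). f (\<zeta>, p) / (u (\<zeta>, p) * (\<zeta> - z)))"
          by (simp add: case_prod_unfold)
        fix \<zeta> assume z: "\<zeta> \<in> sphere c s"
        have "u (\<zeta>, p) \<noteq> 0" using nzs[OF c z] zp by (auto simp: N_def)
        then show "(\<lambda>z. f (\<zeta>, p) / (u (\<zeta>, p) * (\<zeta> - z))) holomorphic_on - sphere c s"
          using z by (auto intro!: holomorphic_intros)
      qed
      moreover have "z \<in> - sphere c s" using zp c by (auto simp: N_def)
      ultimately show ?thesis unfolding T_def
        by (simp add: holomorphic_on_imp_differentiable_at open_Compl)
    qed
    have dp: "(\<lambda>p. T c (z,p)) field_differentiable at p" if zp: "(z,p) \<in> N" for z p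
    proof -
      have zs: "z \<notin> sphere c s" using zp c by (auto simp: N_def)
      have "(\<lambda>p. contour_integral (circlepath c s) (\<lambda>\<zeta>. f (\<zeta>, p) / (u (\<zeta>, p) * (\<zeta> - z)))) holomorphic_on ball pi0 \<delta>"
      proof (rule cint_param_holo[OF open_ball s_pos])
        have c1: "continuous_on (sphere c s \<times> ball pi0 \<delta>) (\<lambda>y. f (fst y, snd y))"
          by (rule continuous_on_compose2[OF contf]) (use sOm \<delta> in \<open>auto intro!: continuous_intros\<close>)
        have c2: "continuous_on (sphere c s \<times> ball pi0 \<delta>) (\<lambda>y. u (fst y, snd y) * (fst y - z))"
          by (intro continuous_intros continuous_on_compose2[OF contu]) (use sOm \<delta> in auto)
        have "\<forall>y\<in>sphere c s \<times> ball pi0 \<delta>. u (fst y, snd y) * (fst y - z) \<noteq> 0"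
          using nzs[OF c] zs by auto
        from continuous_on_divide[OF c1 c2 this]
        show "continuous_on (sphere c s \<times> ball pi0 \<delta>) (\<lambda>(\<zeta>, p). f (\<zeta>, p) / (u (\<zeta>, p) * (\<zeta> - z)))"
          by (simp add: case_prod_unfold)
        fix \<zeta> assume z: "\<zeta> \<in> sphere c s"
        show "(\<lambda>p. f (\<zeta>, p) / (u (\<zeta>, p) * (\<zeta> - z))) holomorphic_on ball pi0 \<delta>"
        proof (rule holo_of_fd)
          fix p assume p: "p \<in> ball pi0 \<delta>"
          then have "(\<zeta>,p) \<in> Om \<times> Pi_set" using sOm z \<delta> by auto
          then have "(\<lambda>p. f (\<zeta>,p)) field_differentiable at p" "(\<lambda>p. u (\<zeta>,p)) field_differentiable at p"
            using sh_f sh_u by (auto simp: sephol_def)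
          moreover have "u (\<zeta>,p) * (\<zeta> - z) \<noteq> 0" using nzs[OF c z p] zs z by auto
          ultimately show "(\<lambda>p. f (\<zeta>, p) / (u (\<zeta>, p) * (\<zeta> - z))) field_differentiable at p"
            by (auto intro!: field_differentiable_divide field_differentiable_mult)
        qed
      qed
      moreover have "p \<in> ball pi0 \<delta>" using zp by (auto simp: N_def)
      ultimately show ?thesis unfolding T_def
        by (simp add: holomorphic_on_imp_differentiable_at)
    qed
    show ?thesis unfolding sephol_def using cont dz dp by blast
  qed
  have "sephol N (\<lambda>x. (\<Sum>c\<in>C. T c x) / (2 * of_real pi * \<i>))"
    by (intro sephol_cdiv sephol_sum shT) auto
  moreover have "GG C s = (\<lambda>x. (\<Sum>c\<in>C. T c x) / (2 * of_real pi * \<i>))"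
    by (auto simp: GG_def Gq_def T_def sum_divide_distrib case_prod_unfold)
  ultimately show ?thesis by (simp add: N_def)
qed

end

context L4
begin

definition rr where "rr = (\<lambda>(z,p). poly (Rsel p) z)"
definition gg where "gg = (\<lambda>(z,p). hsel p z)"

lemma R_local:
  assumes cs: "circ_setup Om C \<rho> s" and \<delta>: "ball pi0 \<delta> \<subseteq> Pi_set"
    and nz: "\<forall>p\<in>ball pi0 \<delta>. \<forall>z. (\<forall>c\<in>C. dist z c \<ge> \<rho>) \<longrightarrow> u (z,p) \<noteq> 0" and p: "p \<in> ball pi0 \<delta>"
  shows "(\<forall>z\<in>Om. (\<exists>c\<in>C. dist z c < s) \<longrightarrow> gg (z,p) = GG C s (z,p) \<and> f (z,p) - rr (z,p) = u (z,p) * GG C s (z,p)) \<and>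
     (\<forall>z\<in>Om. (\<forall>c\<in>C. dist z c > s) \<longrightarrow> rr (z,p) = - (u (z,p) * GG C s (z,p)))"
proof -
  have pPi: "p \<in> Pi_set" using p \<delta> by auto
  from exist_local[OF cs \<delta> nz p] obtain R h where P: "Pp p R h"
    and i: "\<forall>z\<in>Om. (\<exists>c\<in>C. dist z c < s) \<longrightarrow> h z = GG C s (z,p) \<and> f (z,p) - poly R z = u (z,p) * GG C s (z,p)"
    and o: "\<forall>z\<in>Om. (\<forall>c\<in>C. dist z c > s) \<longrightarrow> poly R z = - (u (z,p) * GG C s (z,p))"
    by blast
  from uniq[OF pPi P Pp_sel[OF pPi]] have "R = Rsel p" "\<forall>z\<in>Om. h z = hsel p z" by auto
  then show ?thesis using i o by (auto simp: rr_def gg_def)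
qed

lemma N_sub:
  assumes cs: "circ_setup Om C \<rho> s"
  shows "(Om \<inter> (\<Union>c\<in>C. ball c s)) \<subseteq> Om - (\<Union>c\<in>C. sphere c s)"
proof -
  interpret circ_setup Om C \<rho> s by (rule cs)
  show ?thesis
  proof clarify
    fix z c c' assume z: "z \<in> Om" and c: "c \<in> C" "z \<in> ball c s" and c': "c' \<in> C" "z \<in> sphere c' s"
    show False
    proof (cases "c = c'")
      case True then show False using c c' by auto
    next
      case False
      have "dist z c' > s" by (rule ball_far[OF c(1) c'(1) False]) (use c in \<open>auto simp: dist_commute\<close>)
      then show False using c' by (simp add: dist_commute)
    qed
  qed
qed

lemma rr_analytic: "analytic2_on rr (Om \<times> Pi_set)"
  unfolding analytic2_on_def
proof
  fix w assume w: "w \<in> Om \<times> Pi_set"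
  obtain z1 pi0 where wz: "w = (z1,pi0)" by fastforce
  have z1: "z1 \<in> Om" and pi0: "pi0 \<in> Pi_set" using w wz by auto
  from loc_setup[OF pi0] obtain C \<rho> \<delta> where
    d: "finite C" "C \<subseteq> Om" "\<rho> > 0" "\<forall>c\<in>C. cball c (4*\<rho>) \<subseteq> Om"
    "\<forall>c\<in>C. \<forall>c'\<in>C. c \<noteq> c' \<longrightarrow> dist c c' > 8*\<rho>" "\<delta> > 0" "ball pi0 \<delta> \<subseteq> Pi_set"
    "\<forall>q\<in>ball pi0 \<delta>. \<forall>z. (\<forall>c\<in>C. dist z c \<ge> \<rho>) \<longrightarrow> u (z,q) \<noteq> 0" by blast
  have sub0: "Om \<times> ball pi0 \<delta> \<subseteq> Om \<times> Pi_set" using d(7) by auto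
  show "\<exists>e>0. \<exists>a :: nat \<Rightarrow> nat \<Rightarrow> complex. \<forall>x. dist x w < e \<longrightarrow>
          ((\<lambda>(i,j). a i j * (fst x - fst w) ^ i * (snd x - snd w) ^ j) has_sum rr x) UNIV"
  proof (cases "\<exists>c\<in>C. dist z1 c < 3*\<rho>")
    case True
    define s where "s = 3*\<rho>"
    have cs: "circ_setup Om C \<rho> s" by (rule circ_ok) (use d oOm in \<open>auto simp: s_def\<close>)
    define N where "N = (Om \<inter> (\<Union>c\<in>C. ball c s)) \<times> ball pi0 \<delta>"
    have oN: "open N" unfolding N_def using oOm by (intro open_Times open_Int open_UN) auto
    have wN: "w \<in> N" using True z1 d(6) by (auto simp: N_def wz s_def dist_commute)
    have NN: "N \<subseteq> (Om - (\<Union>c\<in>C. sphere c s)) \<times> ball pi0 \<delta>" using N_sub[OF cs] by (auto simp: N_def)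
    have NS: "N \<subseteq> Om \<times> Pi_set" using sub0 by (auto simp: N_def)
    have sh: "sephol N (\<lambda>x. f x - u x * GG C s x)"
      by (intro sephol_diff sephol_mult sephol_subset[OF sh_f NS] sephol_subset[OF sh_u NS]
          sephol_subset[OF GG_sephol[OF cs d(7) d(8)] NN])
    have eq: "rr x = f x - u x * GG C s x" if x: "x \<in> N" for x
    proof -
      obtain z p where xz: "x = (z,p)" by fastforce
      have "z \<in> Om" "\<exists>c\<in>C. dist z c < s" "p \<in> ball pi0 \<delta>" using x by (auto simp: N_def xz dist_commute)
      with R_local[OF cs d(7) d(8)] show ?thesis by (simp add: xz algebra_simps)
    qed
    show ?thesis by (rule analytic2_body[OF oN wN sh eq])
  next
    case False
    define s where "s = 2*\<rho>"
    have cs: "circ_setup Om C \<rho> s" by (rule circ_ok) (use d oOm in \<open>auto simp: s_def\<close>)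
    define N where "N = (Om - (\<Union>c\<in>C. cball c s)) \<times> ball pi0 \<delta>"
    have oN: "open N" unfolding N_def using oOm d(1) by (intro open_Times open_Diff closed_UN) auto
    have wN: "w \<in> N" using False z1 d(3) d(6) by (force simp: N_def wz s_def dist_commute)
    have NN: "N \<subseteq> (Om - (\<Union>c\<in>C. sphere c s)) \<times> ball pi0 \<delta>" by (auto simp: N_def)
    have NS: "N \<subseteq> Om \<times> Pi_set" using sub0 by (auto simp: N_def)
    have sh: "sephol N (\<lambda>x. - (u x * GG C s x))"
      by (intro sephol_uminus sephol_mult sephol_subset[OF sh_u NS]
          sephol_subset[OF GG_sephol[OF cs d(7) d(8)] NN])
    have eq: "rr x = - (u x * GG C s x)" if x: "x \<in> N" for x
    proof -
      obtain z p where xz: "x = (z,p)" by fastforce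
      have "z \<in> Om" "\<forall>c\<in>C. dist z c > s" "p \<in> ball pi0 \<delta>" using x by (auto simp: N_def xz dist_commute)
      with R_local[OF cs d(7) d(8)] show ?thesis by (simp add: xz)
    qed
    show ?thesis by (rule analytic2_body[OF oN wN sh eq])
  qed
qed

lemma gg_analytic: "analytic2_on gg (Om \<times> Pi_set)"
  unfolding analytic2_on_def
proof
  fix w assume w: "w \<in> Om \<times> Pi_set"
  obtain z1 pi0 where wz: "w = (z1,pi0)" by fastforce
  have z1: "z1 \<in> Om" and pi0: "pi0 \<in> Pi_set" using w wz by auto
  from loc_setup[OF pi0] obtain C \<rho> \<delta> where
    d: "finite C" "C \<subseteq> Om" "\<rho> > 0" "\<forall>c\<in>C. cball c (4*\<rho>) \<subseteq> Om"
    "\<forall>c\<in>C. \<forall>c'\<in>C. c \<noteq> c' \<longrightarrow> dist c c' > 8*\<rho>" "\<delta> > 0" "ball pi0 \<delta> \<subseteq> Pi_set"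
    "\<forall>q\<in>ball pi0 \<delta>. \<forall>z. (\<forall>c\<in>C. dist z c \<ge> \<rho>) \<longrightarrow> u (z,q) \<noteq> 0" by blast
  have sub0: "Om \<times> ball pi0 \<delta> \<subseteq> Om \<times> Pi_set" using d(7) by auto
  define s where "s = 2*\<rho>"
  have cs: "circ_setup Om C \<rho> s" by (rule circ_ok) (use d oOm in \<open>auto simp: s_def\<close>)
  show "\<exists>e>0. \<exists>a :: nat \<Rightarrow> nat \<Rightarrow> complex. \<forall>x. dist x w < e \<longrightarrow>
          ((\<lambda>(i,j). a i j * (fst x - fst w) ^ i * (snd x - snd w) ^ j) has_sum gg x) UNIV"
  proof (cases "\<exists>c\<in>C. dist z1 c < s")
    case True
    define N where "N = (Om \<inter> (\<Union>c\<in>C. ball c s)) \<times> ball pi0 \<delta>"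
    have oN: "open N" unfolding N_def using oOm by (intro open_Times open_Int open_UN) auto
    have wN: "w \<in> N" using True z1 d(6) by (auto simp: N_def wz dist_commute)
    have NN: "N \<subseteq> (Om - (\<Union>c\<in>C. sphere c s)) \<times> ball pi0 \<delta>" using N_sub[OF cs] by (auto simp: N_def)
    have sh: "sephol N (GG C s)"
      by (rule sephol_subset[OF GG_sephol[OF cs d(7) d(8)] NN])
    have eq: "gg x = GG C s x" if x: "x \<in> N" for x
    proof -
      obtain z p where xz: "x = (z,p)" by fastforce
      have "z \<in> Om" "\<exists>c\<in>C. dist z c < s" "p \<in> ball pi0 \<delta>" using x by (auto simp: N_def xz dist_commute)
      with R_local[OF cs d(7) d(8)] show ?thesis by (simp add: xz)
    qed
    show ?thesis by (rule analytic2_body[OF oN wN sh eq])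
  next
    case False
    define N where "N = (Om - (\<Union>c\<in>C. cball c \<rho>)) \<times> ball pi0 \<delta>"
    have oN: "open N" unfolding N_def using oOm d(1) by (intro open_Times open_Diff closed_UN) auto
    have wN: "w \<in> N" using False z1 d(3) d(6) by (force simp: N_def wz s_def dist_commute)
    have NS: "N \<subseteq> Om \<times> Pi_set" using sub0 by (auto simp: N_def)
    have unz: "u x \<noteq> 0" if x: "x \<in> N" for x
    proof -
      obtain z p where xz: "x = (z,p)" by fastforce
      have "p \<in> ball pi0 \<delta>" "\<forall>c\<in>C. dist z c \<ge> \<rho>" using x by (auto simp: N_def xz dist_commute)
      then show ?thesis using d(8) xz by auto
    qed
    have shr: "sephol (Om \<times> Pi_set) rr" by (rule analytic2_sephol[OF oS rr_analytic])
    have sh: "sephol N (\<lambda>x. (f x - rr x) / u x)"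
      by (intro sephol_divide sephol_diff sephol_subset[OF sh_f NS] sephol_subset[OF shr NS]
          sephol_subset[OF sh_u NS] unz)
    have eq: "gg x = (f x - rr x) / u x" if x: "x \<in> N" for x
    proof -
      obtain z p where xz: "x = (z,p)" by fastforce
      have zp: "z \<in> Om" "p \<in> Pi_set" using x NS by (auto simp: xz)
      have "f (z,p) - poly (Rsel p) z = hsel p z * u (z,p)" using Pp_sel[OF zp(2)] zp(1) by (auto simp: Pp_def)
      then show ?thesis using unz[OF x] by (simp add: xz gg_def rr_def field_simps)
    qed
    show ?thesis by (rule analytic2_body[OF oN wN sh eq])
  qed
qed

lemma main:
  "\<exists>g r. (analytic2_on g (Om \<times> Pi_set) \<and> analytic2_on r (Om \<times> Pi_set) \<and>
              (\<forall>p\<in>Pi_set. \<exists>q :: complex poly. (q = 0 \<or> degree q < m) \<and> (\<forall>z\<in>Om. r (z, p) = poly q z)) \<and>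
              (\<forall>z\<in>Om. \<forall>p\<in>Pi_set. f (z, p) = g (z, p) * u (z, p) + r (z, p))) \<and>
         (\<forall>g' r'. analytic2_on g' (Om \<times> Pi_set) \<and> analytic2_on r' (Om \<times> Pi_set) \<and>
              (\<forall>p\<in>Pi_set. \<exists>q :: complex poly. (q = 0 \<or> degree q < m) \<and> (\<forall>z\<in>Om. r' (z, p) = poly q z)) \<and>
              (\<forall>z\<in>Om. \<forall>p\<in>Pi_set. f (z, p) = g' (z, p) * u (z, p) + r' (z, p))
            \<longrightarrow> (\<forall>x\<in>Om \<times> Pi_set. g' x = g x \<and> r' x = r x))"
proof -
  have A: "\<forall>p\<in>Pi_set. \<exists>q :: complex poly. (q = 0 \<or> degree q < m) \<and> (\<forall>z\<in>Om. rr (z, p) = poly q z)"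
  proof
    fix p assume p: "p \<in> Pi_set"
    show "\<exists>q :: complex poly. (q = 0 \<or> degree q < m) \<and> (\<forall>z\<in>Om. rr (z, p) = poly q z)"
      using Pp_sel[OF p] by (auto simp: Pp_def rr_def)
  qed
  have B: "\<forall>z\<in>Om. \<forall>p\<in>Pi_set. f (z, p) = gg (z, p) * u (z, p) + rr (z, p)"
  proof (intro ballI)
    fix z p assume z: "z \<in> Om" and p: "p \<in> Pi_set"
    show "f (z, p) = gg (z, p) * u (z, p) + rr (z, p)"
      using Pp_sel[OF p] z by (auto simp: Pp_def rr_def gg_def algebra_simps)
  qed
  have C: "\<forall>g' r'. analytic2_on g' (Om \<times> Pi_set) \<and> analytic2_on r' (Om \<times> Pi_set) \<and>
              (\<forall>p\<in>Pi_set. \<exists>q :: complex poly. (q = 0 \<or> degree q < m) \<and> (\<forall>z\<in>Om. r' (z, p) = poly q z)) \<and>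
              (\<forall>z\<in>Om. \<forall>p\<in>Pi_set. f (z, p) = g' (z, p) * u (z, p) + r' (z, p))
            \<longrightarrow> (\<forall>x\<in>Om \<times> Pi_set. g' x = gg x \<and> r' x = rr x)"
  proof (intro allI impI ballI)
    fix g' r' x
    assume H: "analytic2_on g' (Om \<times> Pi_set) \<and> analytic2_on r' (Om \<times> Pi_set) \<and>
              (\<forall>p\<in>Pi_set. \<exists>q :: complex poly. (q = 0 \<or> degree q < m) \<and> (\<forall>z\<in>Om. r' (z, p) = poly q z)) \<and>
              (\<forall>z\<in>Om. \<forall>p\<in>Pi_set. f (z, p) = g' (z, p) * u (z, p) + r' (z, p))"
      and x: "x \<in> Om \<times> Pi_set"
    obtain z p where xz: "x = (z,p)" by fastforce
    have z: "z \<in> Om" and p: "p \<in> Pi_set" using x xz by auto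
    from H p obtain q where q: "q = 0 \<or> degree q < m" "\<forall>z\<in>Om. r' (z, p) = poly q z" by blast
    have shg: "sephol (Om \<times> Pi_set) g'" using H by (intro analytic2_sephol[OF oS]) auto
    have hol: "(\<lambda>z. g' (z,p)) holomorphic_on Om"
      using shg p by (intro holo_of_fd) (auto simp: sephol_def)
    have "Pp p q (\<lambda>z. g' (z,p))"
      unfolding Pp_def using q hol H p by (auto simp: algebra_simps)
    from uniq[OF p this Pp_sel[OF p]] have "q = Rsel p" "\<forall>z\<in>Om. g' (z,p) = hsel p z" by auto
    then show "g' x = gg x \<and> r' x = rr x" using q z by (auto simp: xz gg_def rr_def)
  qed
  show ?thesis
    by (rule exI[of _ gg], rule exI[of _ rr]) (use gg_analytic rr_analytic A B C in blast)
qed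

end

theorem lemma4:
  fixes Om Pi_set :: "complex set" and f u :: "complex \<times> complex \<Rightarrow> complex" and m :: nat
  assumes "open Om" "connected Om" "Om \<noteq> {}"
    and "open Pi_set" "connected Pi_set" "Pi_set \<noteq> {}"
    and "analytic2_on f (Om \<times> Pi_set)" "analytic2_on u (Om \<times> Pi_set)"
    and "\<forall>p\<in>Pi_set. \<exists>q :: complex poly. degree q = m \<and> (\<forall>z. u (z, p) = poly q z)"
    and "\<forall>pi0\<in>Pi_set. \<exists>k::nat. \<exists>zs :: nat \<Rightarrow> complex. \<exists>us :: nat \<Rightarrow> complex \<times> complex \<Rightarrow> complex.
           (\<forall>j<k. zs j \<in> Om \<and> analytic2_on (us j) {(zs j, pi0)} \<and> weierstrass_poly_at (us j) (zs j) pi0) \<and>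
           (\<exists>e>0. \<forall>p\<in>ball pi0 e. \<forall>z. u (z, p) = (\<Prod>j<k. us j (z, p)))"
  shows "\<exists>g r. (analytic2_on g (Om \<times> Pi_set) \<and> analytic2_on r (Om \<times> Pi_set) \<and>
              (\<forall>p\<in>Pi_set. \<exists>q :: complex poly. (q = 0 \<or> degree q < m) \<and> (\<forall>z\<in>Om. r (z, p) = poly q z)) \<and>
              (\<forall>z\<in>Om. \<forall>p\<in>Pi_set. f (z, p) = g (z, p) * u (z, p) + r (z, p))) \<and>
         (\<forall>g' r'. analytic2_on g' (Om \<times> Pi_set) \<and> analytic2_on r' (Om \<times> Pi_set) \<and>
              (\<forall>p\<in>Pi_set. \<exists>q :: complex poly. (q = 0 \<or> degree q < m) \<and> (\<forall>z\<in>Om. r' (z, p) = poly q z)) \<and>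
              (\<forall>z\<in>Om. \<forall>p\<in>Pi_set. f (z, p) = g' (z, p) * u (z, p) + r' (z, p))
            \<longrightarrow> (\<forall>x\<in>Om \<times> Pi_set. g' x = g x \<and> r' x = r x))"
proof -
  interpret L4 Om Pi_set f u m by unfold_locales (use assms in auto)
  show ?thesis by (rule main)
qed

end
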